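(* Let $a,b,c,d\in\mathbb C$ and let $\phi_1,\phi_2$ be holomorphic functions on an open set $\mathcal U\subset\mathbb C$ satisfying $$(az^2+b)\phi_1'(z)+(cz^2+d)\phi_2'(z)=2\quad\text{on }\mathcal U.$$ Let $W\subset\mathbb C^2$ be an open set of parameters $(r,s)$ and $C=C_1\cup C_2\subset\mathcal U$ two disjoint simple closed curves bounding disjoint closed discs $\Delta_1,\Delta_2\subset\mathbb C$ such that, for all $(r,s)\in W$, $\Delta_1$ contains $\pm\sqrt r$ and $\Delta_2$ contains $\pm\sqrt s$; let $\chi(z)=(z^2-r)^{-1/2}(z^2-s)^{-1/2}$ be the branch which is single-valued and holomorphic on $\mathbb C\setminus(\Delta_1\cup\Delta_2)$ (cuts joining $\pm\sqrt r$ inside $\Delta_1$ and $\pm\sqrt s$ inside $\Delta_2$), and orient $C$ as the boundary of the region $(\mathbb C\cup\{\infty\})\setminus(\Delta_1\cup\Delta_2)$. Define, for $(r,s)\in W$ and $i=1,2$, $$G_i(r,s)=-\frac{1}{4\pi i}\int_C\frac{z\,\phi_i(z)}{(z^2-r)^{1/2}(z^2-s)^{1/2}}\,dz.$$ Then $$(ar+b)\frac{\partial G_1}{\partial r}+(cr+d)\frac{\partial G_2}{\partial r}+(as+b)\frac{\partial G_1}{\partial s}+(cs+d)\frac{\partial G_2}{\partial s}=0\quad\text{on }W.$$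
   Context: This is the relation, in "twistor coordinates" $(r,s,v_1,v_2)$ on the space of twistor lines, satisfied by the functions $G_i$ whose derivatives $A_i=\partial G_i/\partial r$, $B_i=\partial G_i/\partial s$ give the toric ASD conformal structure $dr\,ds+\frac{(A_2dv_1-A_1dv_2)(B_2dv_1-B_1dv_2)}{(A_2B_1-A_1B_2)^2}$ associated to data $(\tau(z)=-z,\phi)$. *)

theory Defs
  imports "HOL-Complex_Analysis.Complex_Analysis"
begin

definition twistor_G ::
  "(complex \<Rightarrow> complex) \<Rightarrow> (real \<Rightarrow> complex) \<Rightarrow> (real \<Rightarrow> complex)
   \<Rightarrow> (complex \<times> complex \<Rightarrow> complex \<Rightarrow> complex) \<Rightarrow> complex \<times> complex \<Rightarrow> complex" where
  "twistor_G \<phi> \<gamma>1 \<gamma>2 chi p =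
     - (1 / (4 * complex_of_real pi * \<i>)) *
       (contour_integral \<gamma>1 (\<lambda>z. z * \<phi> z * chi p z) +
        contour_integral \<gamma>2 (\<lambda>z. z * \<phi> z * chi p z))"

end

theory Submission
  imports Defs
begin

lemma csqrt_plus1_ge: "1 \<le> cmod (csqrt a + 1)"
proof -
  have "1 \<le> Re (csqrt a + 1)" using Re_csqrt[of a] by simp
  also have "\<dots> \<le> cmod (csqrt a + 1)" by (rule complex_Re_le_cmod)
  finally show ?thesis .
qed

lemma csqrt_minus1_le: "cmod (csqrt a - 1) \<le> cmod (a - 1)"
proof -
  have "a - 1 = (csqrt a - 1) * (csqrt a + 1)"
    by (simp add: algebra_simps power2_eq_square[symmetric])
  hence "cmod (a - 1) = cmod (csqrt a - 1) * cmod (csqrt a + 1)" by (simp add: norm_mult)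
  moreover have "1 \<le> cmod (csqrt a + 1)" by (rule csqrt_plus1_ge)
  ultimately show ?thesis
    by (metis mult.right_neutral mult_left_mono norm_ge_zero)
qed

lemma near1_not_nonpos: "cmod (a - 1) < 1 \<Longrightarrow> a \<notin> \<real>\<^sub>\<le>\<^sub>0"
proof
  assume "cmod (a - 1) < 1" "a \<in> \<real>\<^sub>\<le>\<^sub>0"
  then obtain x where "a = of_real x" "x \<le> 0" by (auto simp: nonpos_Reals_def)
  with \<open>cmod (a - 1) < 1\<close> show False
    by (smt (verit) norm_of_real of_real_1 of_real_diff)
qed

lemma Re_pos_near1: "cmod (a - 1) < 1 \<Longrightarrow> 0 < Re a"
proof -
  assume h: "cmod (a - 1) < 1"
  have "\<bar>Re (a - 1)\<bar> \<le> cmod (a - 1)" by (rule abs_Re_le_cmod)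
  with h show ?thesis by simp
qed

lemma csqrt_mult_near1:
  assumes "cmod (a - 1) \<le> 1/4" "cmod (b - 1) \<le> 1/4"
  shows "csqrt a * csqrt b = csqrt (a * b)"
proof -
  let ?x = "csqrt a" and ?y = "csqrt b"
  have x: "cmod (?x - 1) \<le> 1/4" using csqrt_minus1_le[of a] assms by linarith
  have y: "cmod (?y - 1) \<le> 1/4" using csqrt_minus1_le[of b] assms by linarith
  have ny: "cmod ?y \<le> 5/4"
    using norm_triangle_ineq2[of ?y 1] y by simp
  have "?x * ?y - 1 = (?x - 1) * ?y + (?y - 1)" by (simp add: algebra_simps)
  hence "cmod (?x * ?y - 1) \<le> cmod (?x - 1) * cmod ?y + cmod (?y - 1)"
    by (metis norm_mult norm_triangle_ineq)
  also have "\<dots> \<le> 1/4 * (5/4) + 1/4"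
    using x y ny by (intro add_mono mult_mono) auto
  finally have "cmod (?x * ?y - 1) < 1" by simp
  hence "0 < Re (?x * ?y)" by (rule Re_pos_near1)
  moreover have "(?x * ?y)^2 = a * b" by (simp add: power_mult_distrib)
  ultimately show ?thesis by (metis csqrt_unique)
qed

lemma Re_quot_pos:
  fixes a b :: complex
  assumes "cmod (a - 1) < 1/4" "cmod (b - 1) < 1/4"
  shows "0 < Re (a / b)"
proof -
  have nb: "3/4 < cmod b" using norm_triangle_ineq2[of 1 b] assms(2)
    by (simp add: norm_minus_commute)
  hence b0: "b \<noteq> 0" by auto
  have "a / b - 1 = (a - b) / b" using b0 by (simp add: field_simps)
  have "cmod (a - b) \<le> cmod (a - 1) + cmod (b - 1)"
    using norm_triangle_ineq4[of "a - 1" "b - 1"] by simp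
  hence ab: "cmod (a - b) < 1/2" using assms by simp
  have "cmod (a / b - 1) = cmod (a - b) / cmod b"
    using \<open>a / b - 1 = (a - b) / b\<close> by (simp add: norm_divide)
  also have "\<dots> < 1" using ab nb by (simp add: divide_less_eq)
  finally show ?thesis by (rule Re_pos_near1)
qed

lemma ext_exists:
  fixes F E K :: "complex set" and X q :: "complex \<Rightarrow> complex"
  assumes clF: "closed F" and cK: "compact K" and oE: "open E" and EF: "E \<subseteq> F"
    and FEK: "F \<subseteq> E \<union> K" and KF: "K \<subseteq> F"
    and cX: "continuous_on F X" and hX: "X holomorphic_on E"
    and sq: "\<And>z. z \<in> F \<Longrightarrow> (X z)^2 * q z = 1"
    and hq: "q holomorphic_on UNIV"
  obtains V ext where "open V" "F \<subseteq> V" "ext holomorphic_on V" "\<And>z. z \<in> F \<Longrightarrow> ext z = X z"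
    "\<And>z. z \<in> V \<Longrightarrow> (ext z)^2 * q z = 1"
proof -
  obtain R where R: "R > 0" "\<And>x. x \<in> K \<Longrightarrow> norm x \<le> R"
    using compact_imp_bounded[OF cK] unfolding bounded_pos by blast
  define B where "B = cball (0::complex) (R+1)"
  have cB: "compact B" by (simp add: B_def)
  have cq: "continuous_on UNIV q" using hq by (rule holomorphic_on_imp_continuous_on)
  have ucq: "uniformly_continuous_on B q"
    by (rule compact_uniformly_continuous[OF continuous_on_subset[OF cq] cB]) auto
  define FB where "FB = F \<inter> B"
  have cFB: "compact FB" unfolding FB_def using clF cB by (rule closed_Int_compact)
  have qnz: "q z \<noteq> 0" if "z \<in> F" for z using sq[OF that] by auto
  obtain m where m: "m > 0" "\<And>z. z \<in> FB \<Longrightarrow> m \<le> cmod (q z)"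
  proof (cases "FB = {}")
    case True then show ?thesis using that[of 1] by auto
  next
    case False
    have "continuous_on FB q" by (rule continuous_on_subset[OF cq]) auto
    hence "continuous_on FB (\<lambda>z. cmod (q z))" by (intro continuous_intros)
    from continuous_attains_inf[OF cFB False this]
    obtain x where x: "x \<in> FB" "\<And>z. z \<in> FB \<Longrightarrow> cmod (q x) \<le> cmod (q z)" by blast
    have "q x \<noteq> 0" using x(1) qnz unfolding FB_def by auto
    then show ?thesis using that[of "cmod (q x)"] x by auto
  qed
  obtain M where M: "M \<ge> 1" "\<And>z. z \<in> B \<Longrightarrow> cmod (q z) \<le> M"
  proof -
    have "compact (q ` B)"
      by (rule compact_continuous_image[OF continuous_on_subset[OF cq] cB]) auto
    then have "bounded (q ` B)" by (rule compact_imp_bounded)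
    then obtain b where b: "b > 0" "\<And>x. x \<in> q ` B \<Longrightarrow> norm x \<le> b" unfolding bounded_pos by auto
    show ?thesis
    proof (rule that[of "max b 1"])
      fix z assume "z \<in> B"
      then have "cmod (q z) \<le> b" using b by auto
      thus "cmod (q z) \<le> max b 1" by simp
    qed simp
  qed
  have ucX: "uniformly_continuous_on FB X"
    by (rule compact_uniformly_continuous[OF continuous_on_subset[OF cX] cFB]) (auto simp: FB_def)
  obtain d1 where d1: "d1 > 0" "\<And>x x'. x \<in> B \<Longrightarrow> x' \<in> B \<Longrightarrow> dist x' x < d1 \<Longrightarrow> dist (q x') (q x) < m/8"
  proof -
    have "\<forall>e>0. \<exists>d>0. \<forall>x\<in>B. \<forall>x'\<in>B. dist x' x < d \<longrightarrow> dist (q x') (q x) < e"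
      using ucq by (simp add: uniformly_continuous_on_def)
    moreover have "m/8 > 0" using m(1) by simp
    ultimately obtain d where "d > 0" "\<forall>x\<in>B. \<forall>x'\<in>B. dist x' x < d \<longrightarrow> dist (q x') (q x) < m/8"
      by blast
    thus ?thesis using that by blast
  qed
  obtain d2 where d2: "d2 > 0" "\<And>x x'. x \<in> FB \<Longrightarrow> x' \<in> FB \<Longrightarrow> dist x' x < d2 \<Longrightarrow> dist (X x') (X x) < 1/M"
  proof -
    have "\<forall>e>0. \<exists>d>0. \<forall>x\<in>FB. \<forall>x'\<in>FB. dist x' x < d \<longrightarrow> dist (X x') (X x) < e"
      using ucX by (simp add: uniformly_continuous_on_def)
    moreover have "1/M > 0" using M(1) by simp
    ultimately obtain d where "d > 0" "\<forall>x\<in>FB. \<forall>x'\<in>FB. dist x' x < d \<longrightarrow> dist (X x') (X x) < 1/M"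
      by blast
    thus ?thesis using that by blast
  qed
  define \<delta> where "\<delta> = min 1 (min d1 d2)"
  have \<delta>: "\<delta> > 0" "\<delta> \<le> 1" "\<delta> \<le> d1" "\<delta> \<le> d2" using d1 d2 by (auto simp: \<delta>_def)
  have Xlow: "1/M \<le> cmod (X w)" if "w \<in> FB" for w
  proof (rule ccontr)
    assume "\<not> 1/M \<le> cmod (X w)"
    hence lt: "cmod (X w) < 1/M" by simp
    have "w \<in> F" "w \<in> B" using that by (auto simp: FB_def)
    have e: "cmod (X w)^2 * cmod (q w) = 1"
      using sq[OF \<open>w \<in> F\<close>] by (metis norm_mult norm_one norm_power)
    have "cmod (X w)^2 \<le> (1/M)^2"
      using lt by (intro power_mono) auto
    also have "\<dots> \<le> 1/M" using M(1) by (simp add: power2_eq_square divide_simps)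
    finally have a: "cmod (X w)^2 < 1/M \<or> cmod (X w)^2 = 1/M" by auto
    have "cmod (X w)^2 * cmod (q w) \<le> cmod (X w)^2 * M"
      using M(2)[OF \<open>w \<in> B\<close>] by (simp add: mult_left_mono)
    hence "1 \<le> cmod (X w)^2 * M" using e by simp
    moreover have "cmod (X w)^2 * M < 1"
    proof -
      have "cmod (X w)^2 < (1/M)^2" using lt by (intro power_strict_mono) auto
      hence "cmod (X w)^2 * M < (1/M)^2 * M" using M(1) by (intro mult_strict_right_mono) auto
      also have "\<dots> \<le> 1" using M(1) by (simp add: power2_eq_square divide_simps)
      finally show ?thesis .
    qed
    ultimately show False by simp
  qed
  have inB: "z \<in> B" if "w \<in> K" "dist w z < 1" for w z
  proof -
    have "norm z \<le> norm w + norm (z - w)" by (rule norm_triangle_sub)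
    hence "norm z \<le> norm w + dist w z" by (simp add: dist_norm norm_minus_commute)
    thus ?thesis using R(2)[OF that(1)] that(2) by (simp add: B_def)
  qed
  have QR: "q z \<noteq> 0 \<and> cmod (q w / q z - 1) < 1/7" if "w \<in> K" "dist w z < \<delta>" for w z
  proof -
    have wFB: "w \<in> FB" using that KF inB[of w w] by (auto simp: FB_def)
    have zB: "z \<in> B" using inB[OF that(1)] that(2) \<delta> by auto
    have wB: "w \<in> B" using wFB by (auto simp: FB_def)
    have "dist (q z) (q w) < m/8" using d1(2)[OF wB zB] that(2) \<delta> by (simp add: dist_commute)
    hence dq: "cmod (q w - q z) < m/8" by (simp add: dist_norm norm_minus_commute)
    have qw: "m \<le> cmod (q w)" using m(2)[OF wFB] .
    have "cmod (q w) \<le> cmod (q z) + cmod (q w - q z)"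
      by (metis add.commute diff_add_cancel norm_triangle_ineq)
    hence qz: "7*m/8 < cmod (q z)" using dq qw by linarith
    hence qz0: "q z \<noteq> 0" using m(1) by auto
    have "q w / q z - 1 = (q w - q z) / q z" using qz0 by (simp add: field_simps)
    hence "cmod (q w / q z - 1) = cmod (q w - q z) / cmod (q z)" by (simp add: norm_divide)
    also have "\<dots> < 1/7"
    proof -
      have "7 * cmod (q w - q z) < cmod (q z)" using dq qz by linarith
      thus ?thesis using qz0 by (simp add: divide_less_eq)
    qed
    finally show ?thesis using qz0 by simp
  qed
  have LC: "X z = X w * csqrt (q w / q z)" if wK: "w \<in> K" and zF: "z \<in> F" and wzd: "dist w z < \<delta>" for w z
  proof -
    have wFB: "w \<in> FB" using wK KF inB[of w w] by (auto simp: FB_def)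
    have zFB: "z \<in> FB" using inB[OF wK] zF wzd \<delta> by (auto simp: FB_def)
    have wF: "w \<in> F" using wK KF by auto
    have qz: "q z \<noteq> 0" using QR[OF wK wzd] by auto
    define c where "c = csqrt (q w / q z)"
    have c2: "c^2 = q w / q z" by (simp add: c_def)
    have "(X w * c)^2 = (X w)^2 * q w / q z" by (simp add: power_mult_distrib c2)
    also have "\<dots> = 1 / q z" using sq[OF wF] by simp
    also have "\<dots> = (X z)^2" using sq[OF zF] qz by (simp add: field_simps)
    finally have "(X z)^2 = (X w * c)^2" by simp
    hence "X z = X w * c \<or> X z = - (X w * c)" by (simp add: power2_eq_iff)
    moreover have "X z \<noteq> - (X w * c)"
    proof
      assume h: "X z = - (X w * c)"
      have "X z - X w = - X w * (c + 1)" using h by (simp add: algebra_simps)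
      hence "cmod (X z - X w) = cmod (X w) * cmod (c + 1)" by (simp add: norm_mult)
      also have "\<dots> \<ge> cmod (X w)" using csqrt_plus1_ge[of "q w / q z"]
        by (simp add: c_def mult_le_cancel_left1)
      finally have "1/M \<le> cmod (X z - X w)" using Xlow[OF wFB] by linarith
      moreover have "dist (X z) (X w) < 1/M" using d2(2)[OF wFB zFB] wzd \<delta>
        by (simp add: dist_commute)
      ultimately show False by (simp add: dist_norm)
    qed
    ultimately show ?thesis by (simp add: c_def)
  qed
  define N where "N = (\<Union>w\<in>K. ball w (\<delta>/2))"
  define V where "V = E \<union> N"
  have oV: "open V" unfolding V_def N_def using oE by auto
  have FV: "F \<subseteq> V" unfolding V_def N_def using FEK \<delta>(1) by force
  define wz where "wz z = (SOME w. w \<in> K \<and> dist w z < \<delta>/2)" for z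
  define ext where "ext z = (if z \<in> F then X z else X (wz z) * csqrt (q (wz z) / q z))" for z
  have LF: "ext z = X w0 * csqrt (q w0 / q z)" if w0K: "w0 \<in> K" and w0d: "dist w0 z < \<delta>/2" for w0 z
  proof (cases "z \<in> F")
    case True then show ?thesis using LC[OF w0K True] w0d \<delta> by (simp add: ext_def)
  next
    case False
    have ex: "\<exists>w. w \<in> K \<and> dist w z < \<delta>/2" using w0K w0d by blast
    have w1: "wz z \<in> K" "dist (wz z) z < \<delta>/2"
      using someI_ex[OF ex] unfolding wz_def by auto
    let ?w1 = "wz z"
    have d01: "dist w0 ?w1 < \<delta>"
      using dist_triangle_less_add[OF w0d w1(2)] by simp
    have w1F: "?w1 \<in> F" using w1(1) KF by auto
    have X1: "X ?w1 = X w0 * csqrt (q w0 / q ?w1)" using LC[OF w0K w1F d01] .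
    have q1: "q ?w1 \<noteq> 0" and n1: "cmod (q w0 / q ?w1 - 1) < 1/7" using QR[OF w0K d01] by auto
    have "dist ?w1 z < \<delta>" using w1(2) \<delta> by simp
    hence q2: "q z \<noteq> 0" and n2: "cmod (q ?w1 / q z - 1) < 1/7" using QR[OF w1(1)] by auto
    have "csqrt (q w0 / q ?w1) * csqrt (q ?w1 / q z) = csqrt ((q w0 / q ?w1) * (q ?w1 / q z))"
      using n1 n2 by (intro csqrt_mult_near1) auto
    also have "(q w0 / q ?w1) * (q ?w1 / q z) = q w0 / q z" using q1 by simp
    finally show ?thesis using False X1 by (simp add: ext_def mult.assoc)
  qed
  have hol: "ext holomorphic_on V"
    unfolding holomorphic_on_open[OF oV]
  proof
    fix x assume "x \<in> V"
    show "\<exists>f'. (ext has_field_derivative f') (at x)"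
    proof (cases "x \<in> E")
      case True
      have "(X has_field_derivative deriv X x) (at x)" by (rule holomorphic_derivI[OF hX oE True])
      hence "(ext has_field_derivative deriv X x) (at x)"
        by (rule has_field_derivative_transform_within_open[OF _ oE True]) (use EF in \<open>auto simp: ext_def\<close>)
      thus ?thesis by blast
    next
      case False
      then obtain w0 where w0: "w0 \<in> K" "x \<in> ball w0 (\<delta>/2)" using \<open>x \<in> V\<close> by (auto simp: V_def N_def)
      let ?g = "\<lambda>z. X w0 * csqrt (q w0 / q z)"
      have "?g holomorphic_on ball w0 (\<delta>/2)"
      proof (intro holomorphic_intros holomorphic_on_subset[OF hq])
        fix z assume z: "z \<in> ball w0 (\<delta>/2)"
        have zd: "dist w0 z < \<delta>" using z \<delta> by simp
        show "q z \<noteq> 0" using QR[OF w0(1) zd] by auto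
        have "cmod (q w0 / q z - 1) < 1" using QR[OF w0(1) zd] by auto
        thus "q w0 / q z \<notin> \<real>\<^sub>\<le>\<^sub>0" by (rule near1_not_nonpos)
      qed auto
      hence "(?g has_field_derivative deriv ?g x) (at x)" using w0(2) by (intro holomorphic_derivI) auto
      hence "(ext has_field_derivative deriv ?g x) (at x)"
        by (rule has_field_derivative_transform_within_open[of _ _ _ "ball w0 (\<delta>/2)"]) (use w0 LF in auto)
      thus ?thesis by blast
    qed
  qed
  have sqV: "(ext z)^2 * q z = 1" if zV: "z \<in> V" for z
  proof (cases "z \<in> F")
    case True then show ?thesis using sq by (simp add: ext_def)
  next
    case False
    then have "z \<in> N" using zV EF by (auto simp: V_def)
    then obtain w0 where w0: "w0 \<in> K" "dist w0 z < \<delta>/2" by (auto simp: N_def)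
    have "dist w0 z < \<delta>" using w0(2) \<delta> by simp
    hence qz: "q z \<noteq> 0" using QR[OF w0(1)] by auto
    have w0F: "w0 \<in> F" using w0 KF by auto
    have "(ext z)^2 * q z = (X w0)^2 * (q w0 / q z) * q z" using LF[OF w0] by (simp add: power_mult_distrib)
    also have "\<dots> = (X w0)^2 * q w0" using qz by simp
    finally show ?thesis using sq[OF w0F] by simp
  qed
  show ?thesis
    by (rule that[OF oV FV hol _ sqV]) (simp add: ext_def)
qed

lemma roots_sep:
  fixes I F :: "complex set"
  assumes oI: "open I" and cF: "closed F" and IF: "I \<inter> F = {}"
    and roots: "\<And>p z. p \<in> cball p0 \<epsilon> \<Longrightarrow> z^2 = p \<Longrightarrow> z \<in> I"
  obtains d where "d > 0" "\<And>p z. p \<in> cball p0 \<epsilon> \<Longrightarrow> z \<in> F \<Longrightarrow> d \<le> cmod (z^2 - p)"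
proof -
  define K where "K = (\<lambda>w::complex. w^2) -` cball p0 \<epsilon>"
  have "closed K" unfolding K_def
    by (intro closed_vimage) (auto intro!: continuous_intros)
  moreover have "bounded K"
  proof -
    have "norm w \<le> max 1 (cmod p0 + \<epsilon>)" if "w \<in> K" for w
    proof (cases "norm w \<le> 1")
      case False
      have "norm (w^2) \<le> cmod p0 + norm (w^2 - p0)"
        by (metis add.commute diff_add_cancel norm_triangle_ineq)
      also have "norm (w^2 - p0) \<le> \<epsilon>" using that by (simp add: K_def dist_norm norm_minus_commute)
      finally have "norm w ^ 2 \<le> cmod p0 + \<epsilon>" by (simp add: norm_power)
      moreover have "norm w * 1 \<le> norm w * norm w" using False by (intro mult_left_mono) auto
      hence "norm w \<le> norm w ^ 2" by (simp add: power2_eq_square)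
      ultimately show ?thesis by simp
    qed simp
    thus ?thesis unfolding bounded_iff by blast
  qed
  ultimately have cK: "compact K" by (simp add: compact_eq_bounded_closed)
  have KF: "K \<inter> F = {}"
  proof -
    have "x \<notin> F" if "x \<in> K" for x
    proof -
      have "x^2 \<in> cball p0 \<epsilon>" using that by (simp add: K_def)
      hence "x \<in> I" using roots by blast
      thus ?thesis using IF by blast
    qed
    thus ?thesis by blast
  qed
  obtain \<delta> where \<delta>: "\<delta> > 0" "\<And>x y. x \<in> K \<Longrightarrow> y \<in> F \<Longrightarrow> \<delta> \<le> dist x y"
    using separate_compact_closed[OF cK cF KF] by blast
  show ?thesis
  proof (rule that[of "\<delta>^2"])
    show "\<delta>^2 > 0" using \<delta> by simp
    fix p z assume p: "p \<in> cball p0 \<epsilon>" and z: "z \<in> F"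
    define w where "w = csqrt p"
    have wK: "w \<in> K" "-w \<in> K" using p by (auto simp: K_def w_def)
    have "z^2 - p = (z - w) * (z - (-w))"
      by (simp add: w_def algebra_simps power2_eq_square[symmetric])
    hence "cmod (z^2 - p) = cmod (z - w) * cmod (z - (-w))" by (simp add: norm_mult)
    moreover have "\<delta> \<le> cmod (z - w)" using \<delta>(2)[OF wK(1) z] by (simp add: dist_norm norm_minus_commute)
    moreover have "\<delta> \<le> cmod (z - (-w))" using \<delta>(2)[OF wK(2) z] by (simp add: dist_norm norm_minus_commute)
    ultimately show "\<delta>^2 \<le> cmod (z^2 - p)"
      using \<delta>(1) by (simp add: power2_eq_square mult_mono)
  qed
qed

lemma pm1_dist:
  fixes a b :: complex
  assumes "a = 1 \<or> a = -1" "b = 1 \<or> b = -1" "a \<noteq> b"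
  shows "1 \<le> cmod (b - a)"
  using assms by (elim disjE) simp_all

lemma sign_fix:
  fixes F :: "complex set" and X0 X1 Y :: "complex \<Rightarrow> complex"
  assumes conn: "connected F" and c0: "continuous_on F X0" and c1: "continuous_on F X1"
    and cY: "continuous_on F Y"
    and sq: "\<And>z. z \<in> F \<Longrightarrow> (X1 z)^2 = (X0 z * Y z)^2"
    and nz: "\<And>z. z \<in> F \<Longrightarrow> X0 z * Y z \<noteq> 0"
    and reY: "\<And>z. z \<in> F \<Longrightarrow> 0 \<le> Re (Y z)"
    and wit: "\<exists>z\<in>F. cmod (z^2 * X0 z - 1) < 1/4 \<and> cmod (z^2 * X1 z - 1) < 1/4"
    and zF: "z \<in> F"
  shows "X1 z = X0 z * Y z"
proof -
  define g where "g z = X1 z / (X0 z * Y z)" for z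
  have cg: "continuous_on F g" unfolding g_def
    using nz by (intro continuous_intros c0 c1 cY) auto
  have g1: "g z = 1 \<or> g z = -1" if "z \<in> F" for z
  proof -
    have "(g z)^2 = 1" using sq[OF that] nz[OF that] by (simp add: g_def power_divide)
    thus ?thesis by (simp add: power2_eq_1_iff)
  qed
  have "g constant_on F"
  proof (rule continuous_discrete_range_constant[OF conn cg])
    fix x assume "x \<in> F"
    show "\<exists>e>0. \<forall>y. y \<in> F \<and> g y \<noteq> g x \<longrightarrow> e \<le> cmod (g y - g x)"
      using g1 \<open>x \<in> F\<close> pm1_dist by (intro exI[of _ 1]) auto
  qed
  then obtain c where c: "\<And>z. z \<in> F \<Longrightarrow> g z = c" by (auto simp: constant_on_def)
  obtain z0 where z0: "z0 \<in> F" "cmod (z0^2 * X0 z0 - 1) < 1/4" "cmod (z0^2 * X1 z0 - 1) < 1/4"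
    using wit by blast
  have "c = 1"
  proof (rule ccontr)
    assume "c \<noteq> 1"
    hence "g z0 = -1" using g1[OF z0(1)] c[OF z0(1)] by auto
    hence e: "X1 z0 = - (X0 z0 * Y z0)" using nz[OF z0(1)] by (simp add: g_def field_simps)
    have b0: "z0^2 * X0 z0 \<noteq> 0" using z0(2) by auto
    have "Y z0 = - ((z0^2 * X1 z0) / (z0^2 * X0 z0))" using e b0 by (simp add: field_simps)
    moreover have "0 < Re ((z0^2 * X1 z0) / (z0^2 * X0 z0))" using z0 by (intro Re_quot_pos)
    ultimately have "Re (Y z0) < 0" by simp
    with reY[OF z0(1)] show False by simp
  qed
  hence "g z = 1" using c zF by simp
  thus ?thesis using nz[OF zF] by (simp add: g_def field_simps)
qed

lemma witness_infty:
  fixes X0 X1 :: "complex \<Rightarrow> complex"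
  assumes "((\<lambda>z. z^2 * X0 z) \<longlongrightarrow> 1) at_infinity" "((\<lambda>z. z^2 * X1 z) \<longlongrightarrow> 1) at_infinity"
    and "\<And>z. R \<le> norm z \<Longrightarrow> z \<in> F"
  shows "\<exists>z\<in>F. cmod (z^2 * X0 z - 1) < 1/4 \<and> cmod (z^2 * X1 z - 1) < 1/4"
proof -
  have "eventually (\<lambda>z. dist (z^2 * X0 z) 1 < 1/4) at_infinity"
    using assms(1) by (rule tendstoD) simp
  moreover have "eventually (\<lambda>z. dist (z^2 * X1 z) 1 < 1/4) at_infinity"
    using assms(2) by (rule tendstoD) simp
  moreover have "eventually (\<lambda>z. z \<in> F) at_infinity"
    unfolding eventually_at_infinity using assms(3) by blast
  ultimately have "eventually (\<lambda>z. z \<in> F \<and> dist (z^2 * X0 z) 1 < 1/4 \<and> dist (z^2 * X1 z) 1 < 1/4) at_infinity"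
    by eventually_elim auto
  then obtain b where b: "\<And>z. b \<le> norm z \<Longrightarrow> z \<in> F \<and> dist (z^2 * X0 z) 1 < 1/4 \<and> dist (z^2 * X1 z) 1 < 1/4"
    unfolding eventually_at_infinity by blast
  have "b \<le> norm (complex_of_real (\<bar>b\<bar>))" by simp
  from b[OF this] show ?thesis by (auto simp: dist_norm)
qed

lemma poly_path_replace:
  assumes S: "open S" and g: "valid_path g" and pag: "path_image g \<subseteq> S"
  obtains p B where "valid_path p" "path_image p \<subseteq> S"
    "\<And>t. t \<in> {0..1} \<Longrightarrow> norm (vector_derivative p (at t)) \<le> B"
    "\<And>f. f holomorphic_on S \<Longrightarrow> contour_integral g f = contour_integral p f"
proof -
  have "path g" using g
    by (simp add: valid_path_imp_path)
  then obtain d::real and p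
    where d: "0 < d"
      and p: "polynomial_function p" "path_image p \<subseteq> S"
      and pi: "\<And>f. f holomorphic_on S \<Longrightarrow> contour_integral g f = contour_integral p f"
    using contour_integral_nearby_ends [OF S \<open>path g\<close> pag]
    by (metis cancel_comm_monoid_add_class.diff_cancel g norm_zero path_approx_polynomial_function valid_path_polynomial_function)
  then obtain p' where p': "polynomial_function p'"
    "\<And>x. (p has_vector_derivative (p' x)) (at x)"
    by (blast intro: has_vector_derivative_polynomial_function that)
  then have "bounded(p' ` {0..1})"
    using continuous_on_polymonial_function
    by (force simp: intro!: compact_imp_bounded compact_continuous_image)
  then obtain L where L: "L>0" and nop': "\<And>x. \<lbrakk>0 \<le> x; x \<le> 1\<rbrakk> \<Longrightarrow> norm (p' x) \<le> L"
    by (force simp: bounded_pos)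
  show ?thesis
  proof (rule that[of p L])
    show "valid_path p" using p(1) by (rule valid_path_polynomial_function)
    show "path_image p \<subseteq> S" by fact
    show "norm (vector_derivative p (at t)) \<le> L" if "t \<in> {0..1}" for t
      using nop'[of t] that vector_derivative_at[OF p'(2)] by auto
  qed (rule pi)
qed

lemma param_deriv:
  fixes f :: "complex \<Rightarrow> complex \<Rightarrow> complex"
  assumes S: "open S" and g: "valid_path g" and pag: "path_image g \<subseteq> S" and \<rho>: "\<rho> > 0"
    and hol: "\<And>p. p \<in> ball p0 \<rho> \<Longrightarrow> f p holomorphic_on S"
    and holl: "l holomorphic_on S"
    and ul: "\<And>K. compact K \<Longrightarrow> K \<subseteq> S \<Longrightarrow> uniform_limit K (\<lambda>p z. (f p z - f p0 z) / (p - p0)) l (at p0)"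
  shows "((\<lambda>p. contour_integral g (f p)) has_field_derivative contour_integral g l) (at p0)"
proof -
  obtain \<pi> B where \<pi>: "valid_path \<pi>" "path_image \<pi> \<subseteq> S"
    "\<And>t. t \<in> {0..1} \<Longrightarrow> norm (vector_derivative \<pi> (at t)) \<le> B"
    "\<And>f. f holomorphic_on S \<Longrightarrow> contour_integral g f = contour_integral \<pi> f"
    using poly_path_replace[OF S g pag] by blast
  have p0: "p0 \<in> ball p0 \<rho>" using \<rho> by simp
  have hq: "(\<lambda>z. (f p z - f p0 z) / (p - p0)) holomorphic_on S" if "p \<in> ball p0 \<rho>" for p
    using holomorphic_on_mult[OF holomorphic_on_diff[OF hol[OF that] hol[OF p0]] holomorphic_on_const[of "inverse (p - p0)"]]
    unfolding divide_inverse .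
  have ev: "eventually (\<lambda>p. (\<lambda>z. (f p z - f p0 z) / (p - p0)) contour_integrable_on \<pi>) (at p0)"
  proof -
    have "eventually (\<lambda>p. p \<in> ball p0 \<rho>) (at p0)"
      using \<rho> by (intro eventually_at_in_open') auto
    thus ?thesis
      by eventually_elim (rule contour_integrable_holomorphic_simple[OF hq S \<pi>(1,2)])
  qed
  have cpi: "compact (path_image \<pi>)" using \<pi>(1) by (intro compact_path_image valid_path_imp_path)
  have lim: "((\<lambda>p. contour_integral \<pi> (\<lambda>z. (f p z - f p0 z) / (p - p0))) \<longlongrightarrow> contour_integral \<pi> l) (at p0)"
    by (rule contour_integral_uniform_limit(2)[OF ev ul[OF cpi \<pi>(2)] \<pi>(3) \<pi>(1)]) auto
  have eq: "eventually (\<lambda>p. contour_integral \<pi> (\<lambda>z. (f p z - f p0 z) / (p - p0)) =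
      (contour_integral g (f p) - contour_integral g (f p0)) / (p - p0)) (at p0)"
  proof -
    have "eventually (\<lambda>p. p \<in> ball p0 \<rho>) (at p0)"
      using \<rho> by (intro eventually_at_in_open') auto
    thus ?thesis
    proof eventually_elim
      case (elim p)
      have i1: "f p contour_integrable_on g" by (rule contour_integrable_holomorphic_simple[OF hol[OF elim] S g pag])
      have i0: "f p0 contour_integrable_on g" by (rule contour_integrable_holomorphic_simple[OF hol[OF p0] S g pag])
      have "contour_integral \<pi> (\<lambda>z. (f p z - f p0 z) / (p - p0)) = contour_integral g (\<lambda>z. (f p z - f p0 z) / (p - p0))"
        using \<pi>(4)[OF hq[OF elim]] by simp
      also have "\<dots> = contour_integral g (\<lambda>z. f p z - f p0 z) / (p - p0)"
        by (rule contour_integral_div) (intro contour_integrable_diff i1 i0)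
      also have "\<dots> = (contour_integral g (f p) - contour_integral g (f p0)) / (p - p0)"
        using contour_integral_diff[OF i1 i0] by simp
      finally show ?case .
    qed
  qed
  have "((\<lambda>p. (contour_integral g (f p) - contour_integral g (f p0)) / (p - p0)) \<longlongrightarrow> contour_integral g l) (at p0)"
    using Lim_transform_eventually[OF lim eq] \<pi>(4)[OF holl] by simp
  thus ?thesis by (simp add: has_field_derivative_iff)
qed

lemma join_facts:
  assumes a: "valid_path a" and b: "valid_path b" and ab: "pathfinish a = pathstart b"
    and pa: "path_image a \<subseteq> V" and pb: "path_image b \<subseteq> V" and oV: "open V" and hf: "f holomorphic_on V"
  shows "valid_path (a +++ b)" "path_image (a +++ b) \<subseteq> V"
    "contour_integral (a +++ b) f = contour_integral a f + contour_integral b f"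
    "\<And>w. w \<notin> V \<Longrightarrow> winding_number (a +++ b) w = winding_number a w + winding_number b w"
proof -
  show "valid_path (a +++ b)" using a b ab by (rule valid_path_join)
  show "path_image (a +++ b) \<subseteq> V" using pa pb ab by (simp add: path_image_join)
  show "contour_integral (a +++ b) f = contour_integral a f + contour_integral b f"
    by (rule contour_integral_join[OF contour_integrable_holomorphic_simple[OF hf oV a pa]
          contour_integrable_holomorphic_simple[OF hf oV b pb] a b])
  fix w assume "w \<notin> V"
  hence "w \<notin> path_image a" "w \<notin> path_image b" using pa pb by auto
  thus "winding_number (a +++ b) w = winding_number a w + winding_number b w"
    using a b ab by (intro winding_number_join) (auto intro: valid_path_imp_path)
qed

lemma rev_facts:
  assumes a: "valid_path a" and pa: "path_image a \<subseteq> V"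
  shows "valid_path (reversepath a)" "path_image (reversepath a) \<subseteq> V"
    "contour_integral (reversepath a) f = - contour_integral a f"
    "\<And>w. w \<notin> V \<Longrightarrow> winding_number (reversepath a) w = - winding_number a w"
proof -
  show "valid_path (reversepath a)" using a by simp
  show "path_image (reversepath a) \<subseteq> V" using pa by simp
  show "contour_integral (reversepath a) f = - contour_integral a f" using a by (rule contour_integral_reversepath)
  fix w assume "w \<notin> V"
  hence "w \<notin> path_image a" using pa by auto
  thus "winding_number (reversepath a) w = - winding_number a w"
    using a by (intro winding_number_reversepath) (auto intro: valid_path_imp_path)
qed

lemma two_curve_cauchy:
  fixes V :: "complex set" and f :: "complex \<Rightarrow> complex"
  assumes oV: "open V" and cV: "connected V" and hf: "f holomorphic_on V"
    and g1: "valid_path \<gamma>1" "pathfinish \<gamma>1 = pathstart \<gamma>1" "path_image \<gamma>1 \<subseteq> V"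
    and g2: "valid_path \<gamma>2" "pathfinish \<gamma>2 = pathstart \<gamma>2" "path_image \<gamma>2 \<subseteq> V"
    and wn: "\<And>w. w \<notin> V \<Longrightarrow> winding_number \<gamma>1 w + winding_number \<gamma>2 w = -1"
    and bnd: "bounded (-V)"
    and decay: "\<And>z. R0 \<le> norm z \<Longrightarrow> cmod (f z) \<le> 2 / (norm z)^2"
    and farV: "\<And>z. R0 \<le> norm z \<Longrightarrow> z \<in> V"
  shows "contour_integral \<gamma>1 f + contour_integral \<gamma>2 f = 0"
proof -
  define I where "I = contour_integral \<gamma>1 f + contour_integral \<gamma>2 f"
  obtain b where b: "b > 0" "\<And>w. w \<notin> V \<Longrightarrow> norm w \<le> b"
    using bnd unfolding bounded_pos by auto
  define R1 where "R1 = max R0 b + 1"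
  have R1: "R1 > 0" "R1 > b" "R1 \<ge> R0" using b by (auto simp: R1_def)
  have key: "cmod I \<le> 4 * pi / R" if R: "R \<ge> R1" for R
  proof -
    have Rpos: "R > 0" using R R1 by simp
    define c where "c = circlepath 0 R"
    have vc: "valid_path c" by (simp add: c_def)
    have pc: "path_image c \<subseteq> V"
      using Rpos R R1 farV by (auto simp: c_def path_image_circlepath)
    have cst: "pathstart c = of_real R" "pathfinish c = of_real R" by (simp_all add: c_def)
    have sV: "pathstart \<gamma>1 \<in> V" "pathstart \<gamma>2 \<in> V" "pathstart c \<in> V"
      using g1(3) g2(3) pc pathstart_in_path_image by blast+
    obtain L where L: "polynomial_function L" "path_image L \<subseteq> V" "pathstart L = pathstart \<gamma>1" "pathfinish L = pathstart \<gamma>2"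
      using connected_open_polynomial_connected[OF oV cV sV(1) sV(2)] by blast
    obtain L2 where L2: "polynomial_function L2" "path_image L2 \<subseteq> V" "pathstart L2 = pathstart \<gamma>1" "pathfinish L2 = pathstart c"
      using connected_open_polynomial_connected[OF oV cV sV(1) sV(3)] by blast
    have vL: "valid_path L" "valid_path L2" using L(1) L2(1) by (auto intro: valid_path_polynomial_function)
    note rL = rev_facts[OF vL(1) L(2)]
    note rL2 = rev_facts[OF vL(2) L2(2)]
    define P6 where "P6 = c +++ reversepath L2"
    note j6 = join_facts[OF vc rL2(1) _ pc rL2(2) oV hf, folded P6_def]
    have j6': "pathfinish c = pathstart (reversepath L2)" using L2 cst by simp
    have s6: "pathstart P6 = pathstart c" "pathfinish P6 = pathstart \<gamma>1" using L2 by (simp_all add: P6_def)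
    define P5 where "P5 = L2 +++ P6"
    note j5 = join_facts[OF vL(2) j6(1)[OF j6'] _ L2(2) j6(2)[OF j6'] oV hf, folded P5_def]
    have j5': "pathfinish L2 = pathstart P6" using L2 s6 by simp
    have s5: "pathstart P5 = pathstart \<gamma>1" "pathfinish P5 = pathstart \<gamma>1" using L2 s6 by (simp_all add: P5_def)
    define P4 where "P4 = reversepath L +++ P5"
    have j4': "pathfinish (reversepath L) = pathstart P5" using L s5 by simp
    note j4 = join_facts[OF rL(1) j5(1)[OF j5'] j4' rL(2) j5(2)[OF j5'] oV hf, folded P4_def]
    have s4: "pathstart P4 = pathstart \<gamma>2" "pathfinish P4 = pathstart \<gamma>1" using L s5 by (simp_all add: P4_def)
    define P3 where "P3 = \<gamma>2 +++ P4"
    have j3': "pathfinish \<gamma>2 = pathstart P4" using g2 s4 by simp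
    note j3 = join_facts[OF g2(1) j4(1) j3' g2(3) j4(2) oV hf, folded P3_def]
    have s3: "pathstart P3 = pathstart \<gamma>2" "pathfinish P3 = pathstart \<gamma>1" using s4 by (simp_all add: P3_def)
    define P2 where "P2 = L +++ P3"
    have j2': "pathfinish L = pathstart P3" using L s3 by simp
    note j2 = join_facts[OF vL(1) j3(1) j2' L(2) j3(2) oV hf, folded P2_def]
    have s2: "pathstart P2 = pathstart \<gamma>1" "pathfinish P2 = pathstart \<gamma>1" using L s3 by (simp_all add: P2_def)
    define \<Gamma> where "\<Gamma> = \<gamma>1 +++ P2"
    have j1': "pathfinish \<gamma>1 = pathstart P2" using g1 s2 by simp
    note j1 = join_facts[OF g1(1) j2(1) j1' g1(3) j2(2) oV hf, folded \<Gamma>_def]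
    have loop: "pathfinish \<Gamma> = pathstart \<Gamma>" using s2 by (simp add: \<Gamma>_def)
    have wc: "winding_number c w = 1" if "w \<notin> V" for w
    proof -
      have "norm w < R" using b(2)[OF that] R R1 by linarith
      thus ?thesis unfolding c_def by (intro winding_number_circlepath) simp
    qed
    have wz: "winding_number \<Gamma> w = 0" if "w \<notin> V" for w
    proof -
      have "winding_number \<Gamma> w = (winding_number \<gamma>1 w + winding_number \<gamma>2 w) + 1"
        using j1(4)[OF that] j2(4)[OF that] j3(4)[OF that] j4(4)[OF that] j5(4)[OF j5' that] j6(4)[OF j6' that]
          rL(4)[OF that] rL2(4)[OF that] wc[OF that] by (simp add: algebra_simps)
      thus ?thesis using wn[OF that] by simp
    qed
    have "(f has_contour_integral 0) \<Gamma>"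
      by (rule Cauchy_theorem_global[OF oV hf j1(1) loop j1(2) wz])
    hence "contour_integral \<Gamma> f = 0" by (rule contour_integral_unique)
    moreover have "contour_integral \<Gamma> f = I + contour_integral c f"
      using j1(3) j2(3) j3(3) j4(3) j5(3)[OF j5'] j6(3)[OF j6'] rL(3) rL2(3) by (simp add: I_def)
    ultimately have Ic: "I = - contour_integral c f" by (simp add: add_eq_0_iff)
    have "(f has_contour_integral contour_integral c f) c"
      by (rule has_contour_integral_integral[OF contour_integrable_holomorphic_simple[OF hf oV vc pc]])
    hence "cmod (contour_integral c f) \<le> (2 / R^2) * (2 * pi * R)"
    proof (rule has_contour_integral_bound_circlepath[where z=0 and r=R, folded c_def])
      show "0 \<le> 2 / R^2" by simp
      show "0 < R" by fact
      fix x :: complex assume "norm (x - 0) = R"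
      thus "cmod (f x) \<le> 2 / R^2" using decay[of x] R R1 by simp
    qed
    also have "\<dots> = 4 * pi / R" using Rpos by (simp add: power2_eq_square field_simps)
    finally show ?thesis using Ic by simp
  qed
  show ?thesis
  proof (rule ccontr)
    assume "contour_integral \<gamma>1 f + contour_integral \<gamma>2 f \<noteq> 0"
    hence I0: "cmod I > 0" by (simp add: I_def)
    define R where "R = max R1 (8 * pi / cmod I)"
    have "cmod I \<le> 4 * pi / R" using key[of R] by (simp add: R_def)
    also have "\<dots> \<le> 4 * pi / (8 * pi / cmod I)"
    proof -
      have p: "0 < 8 * pi / cmod I" using I0 by simp
      have le: "8 * pi / cmod I \<le> R" by (simp add: R_def)
      hence "0 < R" using p by linarith
      hence "0 < R * (8 * pi / cmod I)" using p by (rule mult_pos_pos)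
      thus ?thesis using le by (intro divide_left_mono) auto
    qed
    also have "\<dots> = cmod I / 2" using I0 by (simp add: field_simps)
    finally show False using I0 by simp
  qed
qed

lemma h0: fixes c :: complex assumes "c + 1 \<noteq> 0" shows "2 * c + 2 \<noteq> 0"
  by (metis assms mult.right_neutral mult_eq_0_iff ring_class.ring_distribs(1) zero_neq_numeral)
lemma m1: fixes A c w :: complex assumes "w \<noteq> 0" "c + 1 \<noteq> 0" "c \<noteq> 0"
  shows "A / ((c + 1) * w) - A / (2 * (w * (c * c))) = A * (c - 1) * (2 * c + 1) / (2 * (c + 1) * (w * (c * c)))"
proof -
  have h1: "2 * c + 2 \<noteq> 0" using h0[OF assms(2)] .
  have h2: "2 + c * 2 \<noteq> 0" using h1 by (metis add.commute mult.commute)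
  have h3: "1 + c \<noteq> 0" using assms(2) by (metis add.commute)
  show ?thesis using assms h1 h2 h3 by (simp add: divide_simps) (simp add: algebra_simps)
qed

lemma alg_id:
  fixes A c w :: complex
  assumes "w \<noteq> 0" "c + 1 \<noteq> 0" "c \<noteq> 0" "c^2 - 1 \<noteq> 0"
  shows "(A * c - A) / ((c^2 - 1) * w) - A / (2 * (w * c^2)) =
         A * (c^2 - 1) * (2 - 1 / (c + 1)) / (2 * (c + 1) * (w * c^2))"
proof -
  have e1: "c^2 - 1 = (c - 1) * (c + 1)" by (simp add: algebra_simps power2_eq_square)
  have e2: "2 - 1 / (c + 1) = (2 * c + 1) / (c + 1)" using assms(2) by (simp add: field_simps)
  have e3: "c^2 = c * c" by (simp add: power2_eq_square)
  have e1': "c * c - 1 = (c - 1) * (c + 1)" by (simp add: algebra_simps)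
  have cm: "c - 1 \<noteq> 0" using assms(4) e1 by auto
  have l: "(A * c - A) / ((c - 1) * (c + 1) * w) = A / ((c + 1) * w)"
  proof -
    have "(A * c - A) / ((c - 1) * (c + 1) * w) = ((c - 1) * A) / ((c - 1) * ((c + 1) * w))"
      by (simp add: algebra_simps)
    also have "\<dots> = A / ((c + 1) * w)" by (rule nonzero_mult_divide_mult_cancel_left[OF cm])
    finally show ?thesis .
  qed
  have r: "A * ((c - 1) * (c + 1)) * ((2 * c + 1) / (c + 1)) / (2 * (c + 1) * (w * (c * c)))
        = A * (c - 1) * (2 * c + 1) / (2 * (c + 1) * (w * (c * c)))"
  proof -
    have "A * ((c - 1) * (c + 1)) * ((2 * c + 1) / (c + 1)) = A * (c - 1) * (2 * c + 1)"
      using assms(2) by (simp add: field_simps)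
    thus ?thesis by simp
  qed
  have m: "A / ((c + 1) * w) - A / (2 * (w * (c * c))) = A * (c - 1) * (2 * c + 1) / (2 * (c + 1) * (w * (c * c)))"
    using assms(1-3) by (rule m1)
  have "(A * c - A) / ((c^2 - 1) * w) - A / (2 * (w * c^2)) =
        (A * c - A) / ((c - 1) * (c + 1) * w) - A / (2 * (w * (c * c)))" by (simp only: e3 e1')
  also have "\<dots> = A / ((c + 1) * w) - A / (2 * (w * (c * c)))" by (simp only: l)
  also have "\<dots> = A * (c - 1) * (2 * c + 1) / (2 * (c + 1) * (w * (c * c)))" by (rule m)
  also have "\<dots> = A * ((c - 1) * (c + 1)) * ((2 * c + 1) / (c + 1)) / (2 * (c + 1) * (w * (c * c)))"
    by (rule r[symmetric])
  also have "\<dots> = A * (c^2 - 1) * (2 - 1 / (c + 1)) / (2 * (c + 1) * (w * c^2))" by (simp only: e3 e1' e2)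
  finally show ?thesis .
qed

lemma ul_sqrt:
  fixes K :: "complex set" and A :: "complex \<Rightarrow> complex"
  assumes cK: "compact K" and cA: "continuous_on K A" and \<eta>: "\<eta> > 0"
    and K\<eta>: "\<And>z. z \<in> K \<Longrightarrow> \<eta> \<le> cmod (z^2 - p0)"
  shows "uniform_limit K
    (\<lambda>p z. (A z * csqrt ((z^2 - p0) / (z^2 - p)) - A z * csqrt ((z^2 - p0) / (z^2 - p0))) / (p - p0))
    (\<lambda>z. A z / (2 * (z^2 - p0))) (at p0)"
  unfolding uniform_limit_iff
proof (intro allI impI)
  fix e :: real assume e: "e > 0"
  obtain MA where MA: "MA > 0" "\<And>z. z \<in> K \<Longrightarrow> cmod (A z) \<le> MA"
    using compact_imp_bounded[OF compact_continuous_image[OF cA cK]] unfolding bounded_pos by auto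
  define \<delta> where "\<delta> = min (\<eta>/2) (e * \<eta>^2 / (3 * MA))"
  have \<delta>: "\<delta> > 0" "\<delta> \<le> \<eta>/2" "\<delta> \<le> e * \<eta>^2 / (3 * MA)" using \<eta> e MA by (auto simp: \<delta>_def)
  show "\<forall>\<^sub>F p in at p0. \<forall>z\<in>K. dist ((A z * csqrt ((z^2 - p0) / (z^2 - p)) - A z * csqrt ((z^2 - p0) / (z^2 - p0))) / (p - p0))
                          (A z / (2 * (z^2 - p0))) < e"
    unfolding eventually_at
  proof (intro exI[of _ \<delta>] conjI)
    show "\<delta> > 0" by fact
    show "\<forall>p\<in>UNIV. p \<noteq> p0 \<and> dist p p0 < \<delta> \<longrightarrow> (\<forall>z\<in>K. dist ((A z * csqrt ((z^2 - p0) / (z^2 - p)) - A z * csqrt ((z^2 - p0) / (z^2 - p0))) / (p - p0))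
                          (A z / (2 * (z^2 - p0))) < e)"
  proof (intro ballI impI)
    fix p z assume "p \<in> UNIV" and p: "p \<noteq> p0 \<and> dist p p0 < \<delta>" and z: "z \<in> K"
    have pp: "cmod (p - p0) < \<delta>" "p - p0 \<noteq> 0" using p by (auto simp: dist_norm)
    have z0: "\<eta> \<le> cmod (z^2 - p0)" using K\<eta>[OF z] .
    define w where "w = z^2 - p"
    have "cmod (z^2 - p0) \<le> cmod w + cmod (p - p0)"
      unfolding w_def by (metis diff_add_cancel add_diff_eq norm_triangle_ineq)
    hence wlow: "\<eta>/2 \<le> cmod w" using z0 pp \<delta> by linarith
    hence w0: "w \<noteq> 0" using \<eta> by auto
    define u where "u = (p - p0) / w"
    have ratio: "(z^2 - p0) / (z^2 - p) = 1 + u" using w0 by (simp add: u_def w_def field_simps)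
    define c where "c = csqrt (1 + u)"
    have c2: "c^2 = 1 + u" by (simp add: c_def)
    have c1: "1 \<le> cmod (c + 1)" unfolding c_def by (rule csqrt_plus1_ge)
    hence c10: "c + 1 \<noteq> 0" by auto
    have u0: "u \<noteq> 0" using pp w0 by (simp add: u_def)
    have zp0: "z^2 - p0 \<noteq> 0" using z0 \<eta> by auto
    have "z^2 - p0 = w * (1 + u)" using w0 by (simp add: u_def w_def field_simps)
    hence zc: "z^2 - p0 = w * c^2" by (simp add: c2)
    hence cnz: "c \<noteq> 0" using zp0 by auto
    have pc: "p - p0 = (c^2 - 1) * w" using w0 by (simp add: c2 u_def)
    have one: "csqrt ((z^2 - p0) / (z^2 - p0)) = 1" using zp0 by simp
    have "(A z * csqrt ((z^2 - p0) / (z^2 - p)) - A z * csqrt ((z^2 - p0) / (z^2 - p0))) / (p - p0)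
          - A z / (2 * (z^2 - p0))
        = (A z * c - A z) / ((c^2 - 1) * w) - A z / (2 * (w * c^2))"
    proof -
      have "csqrt ((z^2 - p0) / (z^2 - p)) = c" by (simp add: ratio c_def)
      hence "(A z * csqrt ((z^2 - p0) / (z^2 - p)) - A z * csqrt ((z^2 - p0) / (z^2 - p0))) / (p - p0)
          - A z / (2 * (z^2 - p0)) = (A z * c - A z * 1) / (p - p0) - A z / (2 * (z^2 - p0))"
        by (simp only: one)
      also have "\<dots> = (A z * c - A z) / ((c^2 - 1) * w) - A z / (2 * (w * c^2))"
        by (simp only: pc zc mult_1_right)
      finally show ?thesis .
    qed
    also have "\<dots> = A z * (c^2 - 1) * (2 - 1 / (c + 1)) / (2 * (c + 1) * (w * c^2))"
      using w0 c10 cnz u0 c2 by (intro alg_id) auto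
    finally have eq: "(A z * csqrt ((z^2 - p0) / (z^2 - p)) - A z * csqrt ((z^2 - p0) / (z^2 - p0))) / (p - p0)
          - A z / (2 * (z^2 - p0)) = A z * (c^2 - 1) * (2 - 1 / (c + 1)) / (2 * (c + 1) * (z^2 - p0))"
      by (simp add: zc)
    have n1: "cmod (c^2 - 1) \<le> 2 * cmod (p - p0) / \<eta>"
    proof -
      have "cmod (c^2 - 1) = cmod (p - p0) / cmod w" by (simp add: c2 u_def norm_divide)
      also have "\<dots> \<le> cmod (p - p0) / (\<eta>/2)"
      proof (rule divide_left_mono)
        show "\<eta>/2 \<le> cmod w" by fact
        show "0 \<le> cmod (p - p0)" by simp
        have "0 < cmod w" using wlow \<eta> by linarith
        thus "0 < cmod w * (\<eta>/2)" using \<eta> by simp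
      qed
      also have "\<dots> = 2 * cmod (p - p0) / \<eta>" by simp
      finally show ?thesis .
    qed
    have n2: "cmod (2 - 1 / (c + 1)) \<le> 3"
    proof -
      have "cmod (1 / (c + 1)) \<le> 1" using c1 by (simp add: norm_divide divide_le_eq_1)
      hence "cmod (2 - 1 / (c + 1)) \<le> 2 + 1" using norm_triangle_ineq4[of 2 "1/(c+1)"] by simp
      thus ?thesis by simp
    qed
    have "cmod (A z * (c^2 - 1) * (2 - 1 / (c + 1)) / (2 * (c + 1) * (z^2 - p0)))
        = cmod (A z) * cmod (c^2 - 1) * cmod (2 - 1 / (c + 1)) / (2 * cmod (c + 1) * cmod (z^2 - p0))"
      by (simp only: norm_mult norm_divide norm_numeral)
    also have "\<dots> \<le> MA * (2 * cmod (p - p0) / \<eta>) * 3 / (2 * 1 * \<eta>)"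
    proof (rule frac_le)
      show "0 \<le> MA * (2 * cmod (p - p0) / \<eta>) * 3" using MA \<eta> by simp
      show "cmod (A z) * cmod (c^2 - 1) * cmod (2 - 1 / (c + 1)) \<le> MA * (2 * cmod (p - p0) / \<eta>) * 3"
        using MA(2)[OF z] n1 n2 MA(1) \<eta> by (intro mult_mono) auto
      show "0 < 2 * 1 * \<eta>" using \<eta> by simp
      show "2 * 1 * \<eta> \<le> 2 * cmod (c + 1) * cmod (z^2 - p0)"
        using c1 z0 \<eta> by (intro mult_mono) auto
    qed
    also have "\<dots> = 3 * MA * cmod (p - p0) / \<eta>^2" using \<eta> by (simp add: power2_eq_square field_simps)
    also have "\<dots> < 3 * MA * \<delta> / \<eta>^2" using pp MA \<eta> by (intro divide_strict_right_mono) auto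
    also have "\<dots> \<le> 3 * MA * (e * \<eta>^2 / (3 * MA)) / \<eta>^2" using \<delta> MA \<eta>
      by (intro divide_right_mono mult_left_mono) auto
    also have "\<dots> = e" using MA \<eta> by simp
    finally show "dist ((A z * csqrt ((z^2 - p0) / (z^2 - p)) - A z * csqrt ((z^2 - p0) / (z^2 - p0))) / (p - p0))
                          (A z / (2 * (z^2 - p0))) < e"
      using eq by (simp add: dist_norm)
  qed
  qed
qed

lemma deriv_pkg:
  fixes F S :: "complex set" and Xp :: "complex \<Rightarrow> complex \<Rightarrow> complex"
    and B Eb m :: "complex \<Rightarrow> complex" and \<gamma> :: "real \<Rightarrow> complex"
  assumes conn: "connected F" and farF: "\<And>z. R \<le> norm z \<Longrightarrow> z \<in> F"
    and oS: "open S" and hB: "B holomorphic_on S" and hE: "Eb holomorphic_on S"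
    and \<eta>: "\<eta> > 0" and S\<eta>: "\<And>z. z \<in> S \<Longrightarrow> \<eta> < cmod (z^2 - p0)"
    and \<gamma>: "valid_path \<gamma>" "path_image \<gamma> \<subseteq> S" "path_image \<gamma> \<subseteq> F"
    and \<rho>0: "\<rho>0 > 0" "\<rho>0 \<le> \<eta>/2"
    and Fsep: "\<And>p z. p \<in> ball p0 \<rho>0 \<Longrightarrow> z \<in> F \<Longrightarrow> cmod (p - p0) < cmod (z^2 - p)"
    and cX: "\<And>p. p \<in> ball p0 \<rho>0 \<Longrightarrow> continuous_on F (Xp p)"
    and sqX: "\<And>p z. p \<in> ball p0 \<rho>0 \<Longrightarrow> z \<in> F \<Longrightarrow> (Xp p z)^2 * ((z^2 - p) * m z) = 1"
    and infX: "\<And>p. p \<in> ball p0 \<rho>0 \<Longrightarrow> ((\<lambda>z. z^2 * Xp p z) \<longlongrightarrow> 1) at_infinity"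
    and EbX: "\<And>z. z \<in> F \<Longrightarrow> Eb z = Xp p0 z"
  shows "((\<lambda>p. contour_integral \<gamma> (\<lambda>z. B z * Xp p z)) has_field_derivative
            contour_integral \<gamma> (\<lambda>z. B z * Eb z / (2 * (z^2 - p0)))) (at p0)"
proof -
  have p0b: "p0 \<in> ball p0 \<rho>0" using \<rho>0 by simp
  have sign: "Xp p z = Xp p0 z * csqrt ((z^2 - p0) / (z^2 - p))" if p: "p \<in> ball p0 \<rho>0" and zF: "z \<in> F" for p z
  proof -
    have nzF: "z^2 - p \<noteq> 0" if "z \<in> F" for z using Fsep[OF p that] by auto
    have nzF0: "z^2 - p0 \<noteq> 0" if "z \<in> F" for z using Fsep[OF p0b that] by auto
    have near: "cmod ((z^2 - p0) / (z^2 - p) - 1) < 1" if "z \<in> F" for z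
    proof -
      have "(z^2 - p0) / (z^2 - p) - 1 = (p - p0) / (z^2 - p)" using nzF[OF that] by (simp add: field_simps)
      hence "cmod ((z^2 - p0) / (z^2 - p) - 1) = cmod (p - p0) / cmod (z^2 - p)" by (simp add: norm_divide)
      also have "\<dots> < 1" using Fsep[OF p that] nzF[OF that] by (simp add: divide_less_eq)
      finally show ?thesis .
    qed
    have cY: "continuous_on F (\<lambda>z. csqrt ((z^2 - p0) / (z^2 - p)))"
    proof (rule continuous_on_compose2[OF continuous_on_csqrt])
      show "continuous_on F (\<lambda>z. (z^2 - p0) / (z^2 - p))"
        using nzF by (intro continuous_intros) auto
      show "(\<lambda>z. (z^2 - p0) / (z^2 - p)) ` F \<subseteq> - \<real>\<^sub>\<le>\<^sub>0"
        using near near1_not_nonpos by blast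
    qed
    have mnz: "m z \<noteq> 0" if "z \<in> F" for z using sqX[OF p0b that] by auto
    have sq: "(Xp p z)^2 = (Xp p0 z * csqrt ((z^2 - p0) / (z^2 - p)))^2" if "z \<in> F" for z
    proof -
      have a: "(Xp p z)^2 = 1 / ((z^2 - p) * m z)" using sqX[OF p that] nzF[OF that] mnz[OF that]
        by (simp add: field_simps)
      have b: "(Xp p0 z)^2 = 1 / ((z^2 - p0) * m z)" using sqX[OF p0b that] nzF0[OF that] mnz[OF that]
        by (simp add: field_simps)
      have gen: "1 / (bb * mm) = 1 / (aa * mm) * (aa / bb)" if "aa \<noteq> 0" "bb \<noteq> 0" "mm \<noteq> 0" for aa bb mm :: complex
        using that by (simp add: field_simps)
      show ?thesis unfolding power_mult_distrib power2_csqrt a b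
        by (rule gen[OF nzF0[OF that] nzF[OF that] mnz[OF that]])
    qed
    have nz: "Xp p0 z * csqrt ((z^2 - p0) / (z^2 - p)) \<noteq> 0" if "z \<in> F" for z
    proof -
      have "Xp p0 z \<noteq> 0" using sqX[OF p0b that] by auto
      moreover have "csqrt ((z^2 - p0) / (z^2 - p)) \<noteq> 0" using nzF[OF that] nzF0[OF that] by simp
      ultimately show ?thesis by simp
    qed
    show ?thesis
      by (rule sign_fix[OF conn cX[OF p0b] cX[OF p] cY sq nz Re_csqrt
            witness_infty[OF infX[OF p0b] infX[OF p] farF] zF])
  qed
  define f where "f p z = B z * Eb z * csqrt ((z^2 - p0) / (z^2 - p))" for p z
  define l where "l z = B z * Eb z / (2 * (z^2 - p0))" for z
  have eqI: "contour_integral \<gamma> (\<lambda>z. B z * Xp p z) = contour_integral \<gamma> (f p)" if p: "p \<in> ball p0 \<rho>0" for p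
  proof (rule contour_integral_eq)
    fix z assume "z \<in> path_image \<gamma>"
    hence zF: "z \<in> F" using \<gamma>(3) by auto
    show "B z * Xp p z = f p z" using sign[OF p zF] EbX[OF zF] by (simp add: f_def)
  qed
  have S0: "z^2 - p0 \<noteq> 0" if "z \<in> S" for z using S\<eta>[OF that] \<eta> by auto
  have hol: "f p holomorphic_on S" if p: "p \<in> ball p0 \<rho>0" for p
  proof -
    have pp: "cmod (p - p0) < \<rho>0" using p by (simp add: dist_norm norm_minus_commute)
    have lowS: "\<eta>/2 < cmod (z^2 - p)" if "z \<in> S" for z
    proof -
      have "cmod (z^2 - p0) \<le> cmod (z^2 - p) + cmod (p - p0)"
        by (metis diff_add_cancel add_diff_eq norm_triangle_ineq)
      thus ?thesis using S\<eta>[OF that] pp \<rho>0 by linarith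
    qed
    show ?thesis unfolding f_def
    proof (intro holomorphic_intros hB hE)
      fix z assume z: "z \<in> S"
      show nz: "z^2 - p \<noteq> 0" using lowS[OF z] \<eta> by auto
      have "(z^2 - p0) / (z^2 - p) - 1 = (p - p0) / (z^2 - p)" using nz by (simp add: field_simps)
      hence "cmod ((z^2 - p0) / (z^2 - p) - 1) = cmod (p - p0) / cmod (z^2 - p)" by (simp add: norm_divide)
      also have "\<dots> < 1" using lowS[OF z] pp \<rho>0 nz by (simp add: divide_less_eq)
      finally show "(z^2 - p0) / (z^2 - p) \<notin> \<real>\<^sub>\<le>\<^sub>0" by (rule near1_not_nonpos)
    qed
  qed
  have holl: "l holomorphic_on S" unfolding l_def using S0 by (intro holomorphic_intros hB hE) auto
  have ul: "uniform_limit K (\<lambda>p z. (f p z - f p0 z) / (p - p0)) l (at p0)" if K: "compact K" "K \<subseteq> S" for K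
  proof -
    have cA: "continuous_on K (\<lambda>z. B z * Eb z)"
      using holomorphic_on_imp_continuous_on[OF holomorphic_on_mult[OF hB hE]] K(2)
      by (rule continuous_on_subset)
    show ?thesis
      unfolding f_def l_def
      by (rule ul_sqrt[OF K(1) cA \<eta>]) (use K(2) S\<eta> in \<open>auto intro: less_imp_le\<close>)
  qed
  have der: "((\<lambda>p. contour_integral \<gamma> (f p)) has_field_derivative contour_integral \<gamma> l) (at p0)"
    by (rule param_deriv[OF oS \<gamma>(1,2) \<rho>0(1) hol holl ul])
  show ?thesis
    unfolding l_def[symmetric]
    by (rule has_field_derivative_transform_within_open[OF der open_ball p0b]) (simp add: eqI)
qed

lemma v1:
  fixes a b c d r s z u e f1 f2 R S :: complex
  assumes R: "R \<noteq> 0" and S: "S \<noteq> 0" and r: "r = u - R" and s: "s = u - S"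
  shows "(a * r + b) * (z * f1 * e / (2 * R)) + (c * r + d) * (z * f2 * e / (2 * R)) + (a * s + b) * (z * f1 * e / (2 * S)) + (c * s + d) * (z * f2 * e / (2 * S))
     = e - ((2 * a * z * f1 + 2 * c * z * f2 + 2) * e + ((a * u + b) * f1 + (c * u + d) * f2) * (- e * z * (1 / R + 1 / S))) / 2"
  unfolding r s using R S by (simp add: field_simps)
lemma v2:
  fixes D e z a b :: complex
  assumes a: "a \<noteq> 0" and b: "b \<noteq> 0" and e: "e \<noteq> 0"
    and h: "2 * e * D * (a * b) + e^2 * (2 * z * b + 2 * z * a) = 0"
  shows "D = - e * z * (1 / a + 1 / b)"
proof -
  have "e * (2 * (D * (a * b) + e * z * (a + b))) = 0"
    using h by (simp add: algebra_simps power2_eq_square)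
  hence "2 * (D * (a * b) + e * z * (a + b)) = 0" using e by simp
  hence "D * (a * b) + e * z * (a + b) = 0" by (metis mult_eq_0_iff zero_neq_numeral)
  hence "D * (a * b) = - (e * z * (a + b))" by (simp add: eq_neg_iff_add_eq_0)
  thus ?thesis using a b by (simp add: field_simps)
qed

theorem mainTheorem7:
  fixes a b c d :: complex
    and U :: "complex set"
    and \<phi>1 \<phi>2 :: "complex \<Rightarrow> complex"
    and W :: "(complex \<times> complex) set"
    and \<gamma>1 \<gamma>2 :: "real \<Rightarrow> complex"
    and chi :: "complex \<times> complex \<Rightarrow> complex \<Rightarrow> complex"
  assumes U_open: "open U"
    and hol1: "\<phi>1 holomorphic_on U"
    and hol2: "\<phi>2 holomorphic_on U"
    and ode: "\<forall>z\<in>U. (a * z^2 + b) * deriv \<phi>1 z + (c * z^2 + d) * deriv \<phi>2 z = 2"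
    and W_open: "open W"
    and curve1: "valid_path \<gamma>1" "simple_path \<gamma>1" "pathfinish \<gamma>1 = pathstart \<gamma>1"
    and curve2: "valid_path \<gamma>2" "simple_path \<gamma>2" "pathfinish \<gamma>2 = pathstart \<gamma>2"
    and C_in_U: "path_image \<gamma>1 \<subseteq> U" "path_image \<gamma>2 \<subseteq> U"
    and discs_disjoint:
      "(path_image \<gamma>1 \<union> inside (path_image \<gamma>1)) \<inter>
       (path_image \<gamma>2 \<union> inside (path_image \<gamma>2)) = {}"
    and orient1: "\<forall>w\<in>inside (path_image \<gamma>1). winding_number \<gamma>1 w = -1"
    and orient2: "\<forall>w\<in>inside (path_image \<gamma>2). winding_number \<gamma>2 w = -1"
    and roots_r: "\<forall>r s z. (r, s) \<in> W \<longrightarrow> z^2 = r \<longrightarrow> z \<in> inside (path_image \<gamma>1)"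
    and roots_s: "\<forall>r s z. (r, s) \<in> W \<longrightarrow> z^2 = s \<longrightarrow> z \<in> inside (path_image \<gamma>2)"
    and chi_cont: "\<forall>r s. (r, s) \<in> W \<longrightarrow>
        continuous_on (- (inside (path_image \<gamma>1) \<union> inside (path_image \<gamma>2))) (chi (r, s))"
    and chi_hol: "\<forall>r s. (r, s) \<in> W \<longrightarrow>
        chi (r, s) holomorphic_on
          - ((path_image \<gamma>1 \<union> inside (path_image \<gamma>1)) \<union>
             (path_image \<gamma>2 \<union> inside (path_image \<gamma>2)))"
    and chi_sq: "\<forall>r s z. (r, s) \<in> W \<longrightarrow>
        z \<notin> inside (path_image \<gamma>1) \<union> inside (path_image \<gamma>2) \<longrightarrow>
        (chi (r, s) z)^2 * ((z^2 - r) * (z^2 - s)) = 1"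
    and chi_infty: "\<forall>r s. (r, s) \<in> W \<longrightarrow>
        ((\<lambda>z. z^2 * chi (r, s) z) \<longlongrightarrow> 1) at_infinity"
  shows "\<forall>r s. (r, s) \<in> W \<longrightarrow>
     (let G1 = twistor_G \<phi>1 \<gamma>1 \<gamma>2 chi; G2 = twistor_G \<phi>2 \<gamma>1 \<gamma>2 chi in
       (\<lambda>r'. G1 (r', s)) field_differentiable (at r) \<and>
       (\<lambda>r'. G2 (r', s)) field_differentiable (at r) \<and>
       (\<lambda>s'. G1 (r, s')) field_differentiable (at s) \<and>
       (\<lambda>s'. G2 (r, s')) field_differentiable (at s) \<and>
       (a * r + b) * deriv (\<lambda>r'. G1 (r', s)) r + (c * r + d) * deriv (\<lambda>r'. G2 (r', s)) r
       + (a * s + b) * deriv (\<lambda>s'. G1 (r, s')) s + (c * s + d) * deriv (\<lambda>s'. G2 (r, s')) s = 0)"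
proof (intro allI impI)
  fix r s assume rsW: "(r, s) \<in> W"
  define P1 where "P1 = path_image \<gamma>1"
  define P2 where "P2 = path_image \<gamma>2"
  define I1 where "I1 = inside P1"
  define I2 where "I2 = inside P2"
  define O1 where "O1 = outside P1"
  define O2 where "O2 = outside P2"
  define D1 where "D1 = P1 \<union> I1"
  define D2 where "D2 = P2 \<union> I2"
  define E where "E = - (D1 \<union> D2)"
  define F where "F = - (I1 \<union> I2)"
  define K where "K = P1 \<union> P2"
  have J1: "open I1" "connected O1" "bounded I1" "I1 \<inter> O1 = {}" "I1 \<union> O1 = - P1" "frontier O1 = P1"
    using Jordan_inside_outside[OF curve1(2,3)] by (simp_all add: I1_def O1_def P1_def)
  have J2: "open I2" "connected O2" "bounded I2" "I2 \<inter> O2 = {}" "I2 \<union> O2 = - P2" "frontier O2 = P2"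
    using Jordan_inside_outside[OF curve2(2,3)] by (simp_all add: I2_def O2_def P2_def)
  have oO1: "open O1" using Jordan_inside_outside[OF curve1(2,3)] by (simp add: O1_def P1_def)
  have oO2: "open O2" using Jordan_inside_outside[OF curve2(2,3)] by (simp add: O2_def P2_def)
  have cP1: "compact P1" unfolding P1_def using curve1(1) by (intro compact_path_image valid_path_imp_path)
  have cP2: "compact P2" unfolding P2_def using curve2(1) by (intro compact_path_image valid_path_imp_path)
  have nD1: "- D1 = O1" using J1(4,5) unfolding D1_def by blast
  have nD2: "- D2 = O2" using J2(4,5) unfolding D2_def by blast
  have clD1: "closed D1" unfolding closed_def nD1 by (rule oO1)
  have clD2: "closed D2" unfolding closed_def nD2 by (rule oO2)
  have bD1: "bounded D1" unfolding D1_def using compact_imp_bounded[OF cP1] J1(3) by simp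
  have bD2: "bounded D2" unfolding D2_def using compact_imp_bounded[OF cP2] J2(3) by simp
  have cD1: "compact D1" using clD1 bD1 by (simp add: compact_eq_bounded_closed)
  have cD2: "compact D2" using clD2 bD2 by (simp add: compact_eq_bounded_closed)
  have D12: "D1 \<inter> D2 = {}" using discs_disjoint by (simp add: D1_def D2_def P1_def P2_def I1_def I2_def)
  have connE: "connected E" unfolding E_def
    by (rule Janiszewski_connected[OF cD1 clD2]) (simp_all add: D12 nD1 nD2 J1(2) J2(2))
  have oE: "open E" unfolding E_def using clD1 clD2 by auto
  have clF: "closed F" unfolding F_def using J1(1) J2(1) by auto
  have EF: "E \<subseteq> F" unfolding E_def F_def D1_def D2_def by auto
  have FEK: "F \<subseteq> E \<union> K" unfolding E_def F_def D1_def D2_def K_def by auto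
  have PI1: "P1 \<inter> I1 = {}" unfolding I1_def using inside_no_overlap[of P1] by blast
  have PI2: "P2 \<inter> I2 = {}" unfolding I2_def using inside_no_overlap[of P2] by blast
  have KF: "K \<subseteq> F" unfolding K_def F_def using PI1 PI2 D12 unfolding D1_def D2_def by auto
  have cK: "compact K" unfolding K_def using cP1 cP2 by (rule compact_Un)
  have Fcl: "F \<subseteq> closure E"
  proof
    fix x assume xF: "x \<in> F"
    show "x \<in> closure E"
    proof (cases "x \<in> E")
      case True then show ?thesis using closure_subset by blast
    next
      case False
      hence "x \<in> K" using xF FEK by auto
      hence "x \<in> P1 \<or> x \<in> P2" by (simp add: K_def)
      thus ?thesis
      proof
        assume x1: "x \<in> P1"
        have "x \<in> closure O1" using x1 J1(6) frontier_def by (metis DiffD1)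
        moreover have "x \<in> O2" using x1 D12 nD2 by (auto simp: D1_def)
        ultimately have "x \<in> closure (O2 \<inter> O1)" using open_Int_closure_subset[OF oO2] by blast
        moreover have "O2 \<inter> O1 = E" unfolding E_def using nD1 nD2 by auto
        ultimately show ?thesis by simp
      next
        assume x2: "x \<in> P2"
        have "x \<in> closure O2" using x2 J2(6) frontier_def by (metis DiffD1)
        moreover have "x \<in> O1" using x2 D12 nD1 by (auto simp: D2_def)
        ultimately have "x \<in> closure (O1 \<inter> O2)" using open_Int_closure_subset[OF oO1] by blast
        moreover have "O1 \<inter> O2 = E" unfolding E_def using nD1 nD2 by auto
        ultimately show ?thesis by simp
      qed
    qed
  qed
  have connF: "connected F" by (rule connected_intermediate_closure[OF connE EF Fcl])
  obtain bD where bD: "bD > 0" "\<And>x. x \<in> D1 \<union> D2 \<Longrightarrow> norm x \<le> bD"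
    using bD1 bD2 unfolding bounded_pos by (metis bounded_Un bD1 bD2 bounded_pos)
  have farE: "z \<in> E" if "bD + 1 \<le> norm z" for z
    using bD(2)[of z] that by (auto simp: E_def)
  have farF: "z \<in> F" if "bD + 1 \<le> norm z" for z using farE[OF that] EF by auto
  have wn1: "winding_number \<gamma>1 w = -1" "winding_number \<gamma>2 w = 0" if "w \<in> I1" for w
  proof -
    show "winding_number \<gamma>1 w = -1" using orient1 that by (simp add: I1_def P1_def)
    have "w \<in> O2" using that D12 nD2 by (auto simp: D1_def)
    thus "winding_number \<gamma>2 w = 0"
      using curve2 by (intro winding_number_zero_in_outside) (auto simp: O2_def P2_def intro: valid_path_imp_path)
  qed
  have wn2: "winding_number \<gamma>2 w = -1" "winding_number \<gamma>1 w = 0" if "w \<in> I2" for w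
  proof -
    show "winding_number \<gamma>2 w = -1" using orient2 that by (simp add: I2_def P2_def)
    have "w \<in> O1" using that D12 nD1 by (auto simp: D2_def)
    thus "winding_number \<gamma>1 w = 0"
      using curve1 by (intro winding_number_zero_in_outside) (auto simp: O1_def P1_def intro: valid_path_imp_path)
  qed
  define X where "X = chi (r, s)"
  define qf where "qf z = (z^2 - r) * (z^2 - s)" for z
  have cXF: "continuous_on F X" using chi_cont rsW by (simp add: X_def F_def I1_def I2_def P1_def P2_def)
  have hXE: "X holomorphic_on E" using chi_hol rsW
    by (simp add: X_def E_def D1_def D2_def I1_def I2_def P1_def P2_def)
  have sqF: "(X z)^2 * qf z = 1" if "z \<in> F" for z
    using chi_sq rsW that by (simp add: X_def qf_def F_def I1_def I2_def P1_def P2_def)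
  have hq: "qf holomorphic_on UNIV" unfolding qf_def by (intro holomorphic_intros)
  obtain V0 ext where V0: "open V0" "F \<subseteq> V0" "ext holomorphic_on V0" "\<And>z. z \<in> F \<Longrightarrow> ext z = X z"
      "\<And>z. z \<in> V0 \<Longrightarrow> (ext z)^2 * qf z = 1"
    using ext_exists[OF clF cK oE EF FEK KF cXF hXE sqF hq] by blast
  define z0 where "z0 = complex_of_real (bD + 1)"
  have z0F: "z0 \<in> F" using farF[of z0] bD by (simp add: z0_def)
  define V where "V = connected_component_set V0 z0"
  have oV: "open V" unfolding V_def by (rule open_connected_component[OF V0(1)])
  have connV: "connected V" unfolding V_def by simp
  have FV: "F \<subseteq> V" unfolding V_def by (rule connected_component_maximal[OF z0F connF V0(2)])
  have VV0: "V \<subseteq> V0" unfolding V_def by (rule connected_component_subset)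
  have holV: "ext holomorphic_on V" using V0(3) VV0 by (rule holomorphic_on_subset)
  have P1F: "P1 \<subseteq> F" and P2F: "P2 \<subseteq> F" using KF by (auto simp: K_def)
  have P1V: "path_image \<gamma>1 \<subseteq> V" and P2V: "path_image \<gamma>2 \<subseteq> V" using P1F P2F FV by (auto simp: P1_def P2_def)
  obtain b2 where b2: "\<And>z. b2 \<le> norm z \<Longrightarrow> dist (z^2 * X z) 1 < 1"
  proof -
    have "eventually (\<lambda>z. dist (z^2 * X z) 1 < 1) at_infinity"
      using chi_infty rsW unfolding X_def by (intro tendstoD) auto
    thus ?thesis using that unfolding eventually_at_infinity by blast
  qed
  define R0 where "R0 = max b2 (bD + 1)"
  have cint0: "contour_integral \<gamma>1 ext + contour_integral \<gamma>2 ext = 0"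
  proof (rule two_curve_cauchy[OF oV connV holV curve1(1) curve1(3) P1V curve2(1) curve2(3) P2V])
    fix w assume "w \<notin> V"
    hence "w \<in> I1 \<or> w \<in> I2" using FV by (auto simp: F_def)
    thus "winding_number \<gamma>1 w + winding_number \<gamma>2 w = -1" using wn1 wn2 by auto
  next
    have "- V \<subseteq> I1 \<union> I2" using FV by (auto simp: F_def)
    thus "bounded (- V)" using J1(3) J2(3) by (meson bounded_Un bounded_subset)
  next
    fix z :: complex assume z: "R0 \<le> norm z"
    hence zE: "z \<in> E" using farE by (simp add: R0_def)
    have "bD + 1 \<le> norm z" using z by (simp add: R0_def)
    hence zpos: "0 < norm z" using bD(1) by linarith
    have "dist (z^2 * X z) 1 < 1" using b2 z by (simp add: R0_def)
    hence "cmod (z^2 * X z) < 2" using norm_triangle_ineq2[of "z^2 * X z" 1] by (simp add: dist_norm)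
    hence "norm z ^ 2 * cmod (X z) < 2" by (simp add: norm_mult norm_power)
    hence "cmod (X z) \<le> 2 / norm z ^ 2" using zpos by (simp add: field_simps)
    thus "cmod (ext z) \<le> 2 / (norm z)^2" using V0(4) zE EF by auto
  next
    fix z :: complex assume z: "R0 \<le> norm z"
    thus "z \<in> V" using farE EF FV by (auto simp: R0_def)
  qed
  define e' where "e' z = - ext z * z * (1 / (z^2 - r) + 1 / (z^2 - s))" for z
  have sqV: "(ext z)^2 * qf z = 1" if "z \<in> V" for z using V0(5) VV0 that by auto
  have nzV: "z^2 - r \<noteq> 0" "z^2 - s \<noteq> 0" "ext z \<noteq> 0" if "z \<in> V" for z
    using sqV[OF that] by (auto simp: qf_def)
  have dext: "(ext has_field_derivative e' z) (at z)" if zV: "z \<in> V" for z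
  proof -
    have d1: "(ext has_field_derivative deriv ext z) (at z)" by (rule holomorphic_derivI[OF holV oV zV])
    have dq: "(qf has_field_derivative (2 * z * (z^2 - s) + 2 * z * (z^2 - r))) (at z)"
    proof -
      have p1: "((\<lambda>z. z^2 - r) has_field_derivative 2 * z) (at z)" by (auto intro!: derivative_eq_intros)
      have p2: "((\<lambda>z. z^2 - s) has_field_derivative 2 * z) (at z)" by (auto intro!: derivative_eq_intros)
      show ?thesis unfolding qf_def by (rule DERIV_mult[OF p1 p2])
    qed
    have d2: "((\<lambda>z. (ext z)^2 * qf z) has_field_derivative
        (of_nat 2 * (deriv ext z * ext z ^ (2 - Suc 0))) * qf z + (2 * z * (z^2 - s) + 2 * z * (z^2 - r)) * (ext z)^2) (at z)"
      by (rule DERIV_mult[OF DERIV_power[OF d1] dq])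
    have d3: "((\<lambda>z. (ext z)^2 * qf z) has_field_derivative 0) (at z)"
    proof -
      have c1: "((\<lambda>z. 1::complex) has_field_derivative 0) (at z)" by simp
      show ?thesis by (rule has_field_derivative_transform_within_open[OF c1 oV zV]) (simp add: sqV)
    qed
    have "(of_nat 2 * (deriv ext z * ext z ^ (2 - Suc 0))) * qf z + (2 * z * (z^2 - s) + 2 * z * (z^2 - r)) * (ext z)^2 = 0"
      using DERIV_unique[OF d2 d3] .
    hence "2 * ext z * deriv ext z * ((z^2 - r) * (z^2 - s)) + (ext z)^2 * (2 * z * (z^2 - s) + 2 * z * (z^2 - r)) = 0"
      by (simp add: qf_def algebra_simps)
    hence "deriv ext z = - ext z * z * (1 / (z^2 - r) + 1 / (z^2 - s))"
      by (rule v2[OF nzV[OF zV]])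
    thus ?thesis using d1 by (simp add: e'_def)
  qed
  define Phi where "Phi z = (a * z^2 + b) * \<phi>1 z + (c * z^2 + d) * \<phi>2 z" for z
  define Phi' where "Phi' z = 2 * a * z * \<phi>1 z + (a * z^2 + b) * deriv \<phi>1 z + 2 * c * z * \<phi>2 z + (c * z^2 + d) * deriv \<phi>2 z" for z
  have dPhi: "(Phi has_field_derivative Phi' z) (at z)" if zU: "z \<in> U" for z
  proof -
    have d1: "(\<phi>1 has_field_derivative deriv \<phi>1 z) (at z)" by (rule holomorphic_derivI[OF hol1 U_open zU])
    have d2: "(\<phi>2 has_field_derivative deriv \<phi>2 z) (at z)" by (rule holomorphic_derivI[OF hol2 U_open zU])
    have da: "((\<lambda>z. a * z^2 + b) has_field_derivative 2 * a * z) (at z)"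
      by (auto intro!: derivative_eq_intros)
    have dc: "((\<lambda>z. c * z^2 + d) has_field_derivative 2 * c * z) (at z)"
      by (auto intro!: derivative_eq_intros)
    have "(Phi has_field_derivative (2 * a * z * \<phi>1 z + deriv \<phi>1 z * (a * z^2 + b)) + (2 * c * z * \<phi>2 z + deriv \<phi>2 z * (c * z^2 + d))) (at z)"
      unfolding Phi_def by (intro DERIV_add DERIV_mult da dc d1 d2)
    thus ?thesis by (simp add: Phi'_def algebra_simps)
  qed
  define Dfun where "Dfun z = Phi' z * ext z + e' z * Phi z" for z
  have dPe: "((\<lambda>z. Phi z * ext z) has_field_derivative Dfun z) (at z within (U \<inter> V))" if "z \<in> U \<inter> V" for z
  proof -
    have "((\<lambda>z. Phi z * ext z) has_field_derivative Phi' z * ext z + e' z * Phi z) (at z)"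
      using that by (intro DERIV_mult dPhi dext) auto
    thus ?thesis unfolding Dfun_def by (rule has_field_derivative_at_within)
  qed
  have cD1: "(Dfun has_contour_integral 0) \<gamma>1"
    by (rule Cauchy_theorem_primitive[OF dPe curve1(1) _ curve1(3)]) (use C_in_U P1V in auto)
  have cD2: "(Dfun has_contour_integral 0) \<gamma>2"
    by (rule Cauchy_theorem_primitive[OF dPe curve2(1) _ curve2(3)]) (use C_in_U P2V in auto)
  obtain e0 where e0: "e0 > 0" "ball (r, s) e0 \<subseteq> W" using W_open rsW open_contains_ball by blast
  define \<epsilon> where "\<epsilon> = e0 / 2"
  have \<epsilon>: "\<epsilon> > 0" using e0 by (simp add: \<epsilon>_def)
  have Wr: "(p, s) \<in> W" if "p \<in> cball r \<epsilon>" for p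
  proof -
    have "dist (r, s) (p, s) = dist r p" by (simp add: dist_Pair_Pair)
    hence "(p, s) \<in> ball (r, s) e0" using that e0 by (simp add: \<epsilon>_def)
    thus ?thesis using e0 by auto
  qed
  have Ws: "(r, p) \<in> W" if "p \<in> cball s \<epsilon>" for p
  proof -
    have "dist (r, s) (r, p) = dist s p" by (simp add: dist_Pair_Pair)
    hence "(r, p) \<in> ball (r, s) e0" using that e0 by (simp add: \<epsilon>_def)
    thus ?thesis using e0 by auto
  qed
  have I1F: "I1 \<inter> F = {}" and I2F: "I2 \<inter> F = {}" by (auto simp: F_def)
  obtain dr where dr: "dr > 0" "\<And>p z. p \<in> cball r \<epsilon> \<Longrightarrow> z \<in> F \<Longrightarrow> dr \<le> cmod (z^2 - p)"
  proof (rule roots_sep[OF J1(1) clF I1F])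
    fix p z assume "p \<in> cball r \<epsilon>" "z^2 = p"
    thus "z \<in> I1" using roots_r Wr by (auto simp: I1_def P1_def)
  qed blast
  obtain ds where ds: "ds > 0" "\<And>p z. p \<in> cball s \<epsilon> \<Longrightarrow> z \<in> F \<Longrightarrow> ds \<le> cmod (z^2 - p)"
  proof (rule roots_sep[OF J2(1) clF I2F])
    fix p z assume "p \<in> cball s \<epsilon>" "z^2 = p"
    thus "z \<in> I2" using roots_s Ws by (auto simp: I2_def P2_def)
  qed blast
  define \<eta> where "\<eta> = min dr ds / 2"
  have \<eta>: "\<eta> > 0" "\<eta> < dr" "\<eta> < ds" using dr ds by (auto simp: \<eta>_def)
  define Sd where "Sd = U \<inter> V \<inter> {z. \<eta> < cmod (z^2 - r)} \<inter> {z. \<eta> < cmod (z^2 - s)}"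
  have oSd: "open Sd" unfolding Sd_def
    by (intro open_Int U_open oV open_Collect_less) (auto intro!: continuous_intros)
  have SdU: "Sd \<subseteq> U" and SdV: "Sd \<subseteq> V" by (auto simp: Sd_def)
  have Sdr: "\<And>z. z \<in> Sd \<Longrightarrow> \<eta> < cmod (z^2 - r)" and Sds: "\<And>z. z \<in> Sd \<Longrightarrow> \<eta> < cmod (z^2 - s)"
    by (auto simp: Sd_def)
  have FSd: "z \<in> Sd" if "z \<in> F" "z \<in> U" for z
  proof -
    have "dr \<le> cmod (z^2 - r)" using dr(2)[of r z] that \<epsilon> by auto
    moreover have "ds \<le> cmod (z^2 - s)" using ds(2)[of s z] that \<epsilon> by auto
    ultimately show ?thesis using that FV \<eta> by (auto simp: Sd_def)
  qed
  have PS1: "path_image \<gamma>1 \<subseteq> Sd" using FSd P1F C_in_U by (auto simp: P1_def)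
  have PS2: "path_image \<gamma>2 \<subseteq> Sd" using FSd P2F C_in_U by (auto simp: P2_def)
  have PF1: "path_image \<gamma>1 \<subseteq> F" and PF2: "path_image \<gamma>2 \<subseteq> F" using P1F P2F by (auto simp: P1_def P2_def)
  define \<rho>0 where "\<rho>0 = min \<epsilon> (\<eta>/2)"
  have \<rho>0: "\<rho>0 > 0" "\<rho>0 \<le> \<eta>/2" "\<rho>0 \<le> \<epsilon>" using \<epsilon> \<eta> by (auto simp: \<rho>0_def)
  have Fsep_r: "cmod (p - r) < cmod (z^2 - p)" if "p \<in> ball r \<rho>0" "z \<in> F" for p z
  proof -
    have "cmod (p - r) < \<rho>0" using that by (simp add: dist_norm norm_minus_commute)
    moreover have "p \<in> cball r \<epsilon>" using that \<rho>0 by auto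
    hence "dr \<le> cmod (z^2 - p)" using dr(2) that(2) by blast
    ultimately show ?thesis using \<rho>0 \<eta> by linarith
  qed
  have Fsep_s: "cmod (p - s) < cmod (z^2 - p)" if "p \<in> ball s \<rho>0" "z \<in> F" for p z
  proof -
    have "cmod (p - s) < \<rho>0" using that by (simp add: dist_norm norm_minus_commute)
    moreover have "p \<in> cball s \<epsilon>" using that \<rho>0 by auto
    hence "ds \<le> cmod (z^2 - p)" using ds(2) that(2) by blast
    ultimately show ?thesis using \<rho>0 \<eta> by linarith
  qed
  have cFr: "continuous_on F (chi (p, s))" if "p \<in> ball r \<rho>0" for p
    using chi_cont Wr[of p] that \<rho>0 by (auto simp: F_def I1_def I2_def P1_def P2_def)
  have cFs: "continuous_on F (chi (r, p))" if "p \<in> ball s \<rho>0" for p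
    using chi_cont Ws[of p] that \<rho>0 by (auto simp: F_def I1_def I2_def P1_def P2_def)
  have sqr: "(chi (p, s) z)^2 * ((z^2 - p) * (z^2 - s)) = 1" if "p \<in> ball r \<rho>0" "z \<in> F" for p z
    using chi_sq Wr[of p] that \<rho>0 by (auto simp: F_def I1_def I2_def P1_def P2_def)
  have sqs: "(chi (r, p) z)^2 * ((z^2 - p) * (z^2 - r)) = 1" if "p \<in> ball s \<rho>0" "z \<in> F" for p z
  proof -
    have "(chi (r, p) z)^2 * ((z^2 - r) * (z^2 - p)) = 1"
      using chi_sq Ws[of p] that \<rho>0 by (auto simp: F_def I1_def I2_def P1_def P2_def)
    thus ?thesis by (simp only: mult.commute[of "z^2 - p" "z^2 - r"])
  qed
  have infr: "((\<lambda>z. z^2 * chi (p, s) z) \<longlongrightarrow> 1) at_infinity" if "p \<in> ball r \<rho>0" for p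
    using chi_infty Wr[of p] that \<rho>0 by auto
  have infs: "((\<lambda>z. z^2 * chi (r, p) z) \<longlongrightarrow> 1) at_infinity" if "p \<in> ball s \<rho>0" for p
    using chi_infty Ws[of p] that \<rho>0 by auto
  have Ebr: "ext z = chi (r, s) z" if "z \<in> F" for z using V0(4)[OF that] by (simp add: X_def)
  have hE: "ext holomorphic_on Sd" using holV SdV by (rule holomorphic_on_subset)
  have hB: "(\<lambda>z. z * \<phi> z) holomorphic_on Sd" if "\<phi> holomorphic_on U" for \<phi>
    using holomorphic_on_subset[OF that SdU] by (intro holomorphic_intros)
  have derR: "((\<lambda>p. contour_integral \<gamma> (\<lambda>z. z * \<phi> z * chi (p, s) z)) has_field_derivative
       contour_integral \<gamma> (\<lambda>z. z * \<phi> z * ext z / (2 * (z^2 - r)))) (at r)"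
    if "\<phi> holomorphic_on U" "valid_path \<gamma>" "path_image \<gamma> \<subseteq> Sd" "path_image \<gamma> \<subseteq> F" for \<phi> \<gamma>
    using deriv_pkg[where B="\<lambda>z. z * \<phi> z" and Xp="\<lambda>p. chi (p, s)" and m="\<lambda>z. z^2 - s" and Eb=ext,
        OF connF farF oSd hB[OF that(1)] hE \<eta>(1) Sdr that(2-4) \<rho>0(1,2) Fsep_r cFr sqr infr Ebr] by simp
  have derS: "((\<lambda>p. contour_integral \<gamma> (\<lambda>z. z * \<phi> z * chi (r, p) z)) has_field_derivative
       contour_integral \<gamma> (\<lambda>z. z * \<phi> z * ext z / (2 * (z^2 - s)))) (at s)"
    if "\<phi> holomorphic_on U" "valid_path \<gamma>" "path_image \<gamma> \<subseteq> Sd" "path_image \<gamma> \<subseteq> F" for \<phi> \<gamma>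
    using deriv_pkg[where B="\<lambda>z. z * \<phi> z" and Xp="\<lambda>p. chi (r, p)" and m="\<lambda>z. z^2 - r" and Eb=ext,
        OF connF farF oSd hB[OF that(1)] hE \<eta>(1) Sds that(2-4) \<rho>0(1,2) Fsep_s cFs sqs infs] Ebr by simp
  define Kc where "Kc = - (1 / (4 * complex_of_real pi * \<i>))"
  have Gdef: "twistor_G \<phi> \<gamma>1 \<gamma>2 chi p = Kc * (contour_integral \<gamma>1 (\<lambda>z. z * \<phi> z * chi p z) + contour_integral \<gamma>2 (\<lambda>z. z * \<phi> z * chi p z))" for \<phi> p
    by (simp add: twistor_G_def Kc_def)
  define Ir where "Ir \<phi> \<gamma> = contour_integral \<gamma> (\<lambda>z. z * \<phi> z * ext z / (2 * (z^2 - r)))" for \<phi> \<gamma>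
  define Is where "Is \<phi> \<gamma> = contour_integral \<gamma> (\<lambda>z. z * \<phi> z * ext z / (2 * (z^2 - s)))" for \<phi> \<gamma>
  have dGr: "((\<lambda>p. twistor_G \<phi> \<gamma>1 \<gamma>2 chi (p, s)) has_field_derivative Kc * (Ir \<phi> \<gamma>1 + Ir \<phi> \<gamma>2)) (at r)"
    if "\<phi> holomorphic_on U" for \<phi>
    unfolding Gdef Ir_def by (intro DERIV_cmult DERIV_add derR that curve1(1) curve2(1) PS1 PS2 PF1 PF2)
  have dGs: "((\<lambda>p. twistor_G \<phi> \<gamma>1 \<gamma>2 chi (r, p)) has_field_derivative Kc * (Is \<phi> \<gamma>1 + Is \<phi> \<gamma>2)) (at s)"
    if "\<phi> holomorphic_on U" for \<phi>
    unfolding Gdef Is_def by (intro DERIV_cmult DERIV_add derS that curve1(1) curve2(1) PS1 PS2 PF1 PF2)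
  have PhiODE: "Phi' z = 2 * a * z * \<phi>1 z + 2 * c * z * \<phi>2 z + 2" if "z \<in> U" for z
  proof -
    have "Phi' z = 2 * a * z * \<phi>1 z + 2 * c * z * \<phi>2 z + ((a * z^2 + b) * deriv \<phi>1 z + (c * z^2 + d) * deriv \<phi>2 z)"
      by (simp add: Phi'_def algebra_simps)
    thus ?thesis using ode that by simp
  qed
  have comb: "(a * r + b) * Ir \<phi>1 \<gamma> + (c * r + d) * Ir \<phi>2 \<gamma> + (a * s + b) * Is \<phi>1 \<gamma> + (c * s + d) * Is \<phi>2 \<gamma>
      = contour_integral \<gamma> ext"
    if vg: "valid_path \<gamma>" and pg: "path_image \<gamma> \<subseteq> Sd" and cDg: "(Dfun has_contour_integral 0) \<gamma>" for \<gamma>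
  proof -
    have Sd0: "z^2 - r \<noteq> 0" "z^2 - s \<noteq> 0" if "z \<in> Sd" for z using Sdr[OF that] Sds[OF that] \<eta> by auto
    have h1: "\<phi>1 holomorphic_on Sd" "\<phi>2 holomorphic_on Sd"
      using holomorphic_on_subset[OF hol1 SdU] holomorphic_on_subset[OF hol2 SdU] by auto
    have i1: "(\<lambda>z. z * \<phi>1 z * ext z / (2 * (z^2 - r))) contour_integrable_on \<gamma>"
      by (rule contour_integrable_holomorphic_simple[OF _ oSd vg pg]) (use Sd0 h1 hE in \<open>intro holomorphic_intros; auto\<close>)
    have i2: "(\<lambda>z. z * \<phi>2 z * ext z / (2 * (z^2 - r))) contour_integrable_on \<gamma>"
      by (rule contour_integrable_holomorphic_simple[OF _ oSd vg pg]) (use Sd0 h1 hE in \<open>intro holomorphic_intros; auto\<close>)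
    have i3: "(\<lambda>z. z * \<phi>1 z * ext z / (2 * (z^2 - s))) contour_integrable_on \<gamma>"
      by (rule contour_integrable_holomorphic_simple[OF _ oSd vg pg]) (use Sd0 h1 hE in \<open>intro holomorphic_intros; auto\<close>)
    have i4: "(\<lambda>z. z * \<phi>2 z * ext z / (2 * (z^2 - s))) contour_integrable_on \<gamma>"
      by (rule contour_integrable_holomorphic_simple[OF _ oSd vg pg]) (use Sd0 h1 hE in \<open>intro holomorphic_intros; auto\<close>)
    have ie: "ext contour_integrable_on \<gamma>"
      by (rule contour_integrable_holomorphic_simple[OF hE oSd vg pg])
    have H: "((\<lambda>z. (a * r + b) * (z * \<phi>1 z * ext z / (2 * (z^2 - r))) + (c * r + d) * (z * \<phi>2 z * ext z / (2 * (z^2 - r)))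
            + (a * s + b) * (z * \<phi>1 z * ext z / (2 * (z^2 - s))) + (c * s + d) * (z * \<phi>2 z * ext z / (2 * (z^2 - s))))
          has_contour_integral ((a * r + b) * Ir \<phi>1 \<gamma> + (c * r + d) * Ir \<phi>2 \<gamma> + (a * s + b) * Is \<phi>1 \<gamma> + (c * s + d) * Is \<phi>2 \<gamma>)) \<gamma>"
      unfolding Ir_def Is_def
      by (intro has_contour_integral_add has_contour_integral_lmul has_contour_integral_integral i1 i2 i3 i4)
    have H2: "((\<lambda>z. ext z - Dfun z / 2) has_contour_integral (contour_integral \<gamma> ext - 0 / 2)) \<gamma>"
      by (intro has_contour_integral_diff has_contour_integral_div has_contour_integral_integral ie cDg)
    have pw: "ext z - Dfun z / 2 = (a * r + b) * (z * \<phi>1 z * ext z / (2 * (z^2 - r))) + (c * r + d) * (z * \<phi>2 z * ext z / (2 * (z^2 - r)))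
            + (a * s + b) * (z * \<phi>1 z * ext z / (2 * (z^2 - s))) + (c * s + d) * (z * \<phi>2 z * ext z / (2 * (z^2 - s)))"
      if "z \<in> path_image \<gamma>" for z
    proof -
      have zS: "z \<in> Sd" using that pg by auto
      hence zU: "z \<in> U" using SdU by auto
      have eqD: "Dfun z = (2 * a * z * \<phi>1 z + 2 * c * z * \<phi>2 z + 2) * ext z
          + ((a * z^2 + b) * \<phi>1 z + (c * z^2 + d) * \<phi>2 z) * (- ext z * z * (1 / (z^2 - r) + 1 / (z^2 - s)))"
        unfolding Dfun_def PhiODE[OF zU] Phi_def e'_def by (simp only: mult.commute[of "- ext z * z * (1 / (z^2 - r) + 1 / (z^2 - s))"])
      show ?thesis unfolding eqD
        by (rule v1[where R="z^2 - r" and S="z^2 - s" and u="z^2", symmetric]) (use Sd0[OF zS] in simp_all)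
    qed
    have "((\<lambda>z. (a * r + b) * (z * \<phi>1 z * ext z / (2 * (z^2 - r))) + (c * r + d) * (z * \<phi>2 z * ext z / (2 * (z^2 - r)))
            + (a * s + b) * (z * \<phi>1 z * ext z / (2 * (z^2 - s))) + (c * s + d) * (z * \<phi>2 z * ext z / (2 * (z^2 - s))))
          has_contour_integral (contour_integral \<gamma> ext - 0 / 2)) \<gamma>"
      by (rule has_contour_integral_eq[OF H2 pw])
    from has_contour_integral_unique[OF H this] show ?thesis by simp
  qed
  have c1: "(a * r + b) * Ir \<phi>1 \<gamma>1 + (c * r + d) * Ir \<phi>2 \<gamma>1 + (a * s + b) * Is \<phi>1 \<gamma>1 + (c * s + d) * Is \<phi>2 \<gamma>1
      = contour_integral \<gamma>1 ext" by (rule comb[OF curve1(1) PS1 cD1])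
  have c2: "(a * r + b) * Ir \<phi>1 \<gamma>2 + (c * r + d) * Ir \<phi>2 \<gamma>2 + (a * s + b) * Is \<phi>1 \<gamma>2 + (c * s + d) * Is \<phi>2 \<gamma>2
      = contour_integral \<gamma>2 ext" by (rule comb[OF curve2(1) PS2 cD2])
  note hr1 = dGr[OF hol1] and hr2 = dGr[OF hol2] and hs1 = dGs[OF hol1] and hs2 = dGs[OF hol2]
  have total: "(a * r + b) * (Kc * (Ir \<phi>1 \<gamma>1 + Ir \<phi>1 \<gamma>2)) + (c * r + d) * (Kc * (Ir \<phi>2 \<gamma>1 + Ir \<phi>2 \<gamma>2))
      + (a * s + b) * (Kc * (Is \<phi>1 \<gamma>1 + Is \<phi>1 \<gamma>2)) + (c * s + d) * (Kc * (Is \<phi>2 \<gamma>1 + Is \<phi>2 \<gamma>2)) = 0"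
  proof -
    have "(a * r + b) * (Kc * (Ir \<phi>1 \<gamma>1 + Ir \<phi>1 \<gamma>2)) + (c * r + d) * (Kc * (Ir \<phi>2 \<gamma>1 + Ir \<phi>2 \<gamma>2))
      + (a * s + b) * (Kc * (Is \<phi>1 \<gamma>1 + Is \<phi>1 \<gamma>2)) + (c * s + d) * (Kc * (Is \<phi>2 \<gamma>1 + Is \<phi>2 \<gamma>2))
      = Kc * (((a * r + b) * Ir \<phi>1 \<gamma>1 + (c * r + d) * Ir \<phi>2 \<gamma>1 + (a * s + b) * Is \<phi>1 \<gamma>1 + (c * s + d) * Is \<phi>2 \<gamma>1)
          + ((a * r + b) * Ir \<phi>1 \<gamma>2 + (c * r + d) * Ir \<phi>2 \<gamma>2 + (a * s + b) * Is \<phi>1 \<gamma>2 + (c * s + d) * Is \<phi>2 \<gamma>2))"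
      by (simp add: algebra_simps)
    also have "\<dots> = Kc * (contour_integral \<gamma>1 ext + contour_integral \<gamma>2 ext)" by (simp only: c1 c2)
    also have "\<dots> = 0" by (simp add: cint0)
    finally show ?thesis .
  qed
  show "let G1 = twistor_G \<phi>1 \<gamma>1 \<gamma>2 chi; G2 = twistor_G \<phi>2 \<gamma>1 \<gamma>2 chi in
       (\<lambda>r'. G1 (r', s)) field_differentiable (at r) \<and>
       (\<lambda>r'. G2 (r', s)) field_differentiable (at r) \<and>
       (\<lambda>s'. G1 (r, s')) field_differentiable (at s) \<and>
       (\<lambda>s'. G2 (r, s')) field_differentiable (at s) \<and>
       (a * r + b) * deriv (\<lambda>r'. G1 (r', s)) r + (c * r + d) * deriv (\<lambda>r'. G2 (r', s)) r
       + (a * s + b) * deriv (\<lambda>s'. G1 (r, s')) s + (c * s + d) * deriv (\<lambda>s'. G2 (r, s')) s = 0"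
    unfolding Let_def
    using total hr1 hr2 hs1 hs2
    by (simp add: DERIV_imp_deriv field_differentiable_def) blast
qed

end
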